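(* Let $\mathsf{C}_A\subset V_A$ and $\mathsf{C}_B\subset V_B$ be proper cones. For every $x$ in the interior of $\mathsf{C}_A\otimes_{\max}\mathsf{C}_B$ and every $y$ in the interior of $\mathsf{C}_B$, there is an integer $k\ge1$ such that \[(\mathrm{Id}_{V_A}\otimes P_{\mathrm{Sym}_k(V_B)})(x\otimes y^{\otimes(k-1)})\in \mathsf{C}_A\otimes_{\min}\mathsf{C}_B^{\otimes_{\min}k}.\]
   Context: A convex cone in a finite-dimensional real vector space is proper if it is closed, contains no line, and is not contained in any hyperplane; $\mathsf{C}^*=\{f\in V^*: f\ge0\text{ on }\mathsf{C}\}$. $\mathsf{C}_A\otimes_{\min}\mathsf{C}_B=\mathrm{conv}\{a\otimes b:a\in\mathsf{C}_A,b\in\mathsf{C}_B\}$ (iterated for $\mathsf{C}_A\otimes_{\min}\mathsf{C}_B^{\otimes_{\min}k}$), and $\mathsf{C}_A\otimes_{\max}\mathsf{C}_B=\{z: (f\otimes g)(z)\ge0\ \forall f\in\mathsf{C}_A^*,g\in\mathsf{C}_B^*\}$. For $\sigma\in\mathfrak{S}_k$, $U_\sigma:V^{\otimes k}\to V^{\otimes k}$ is the linear map with $U_\sigma(x_1\otimes\cdots\otimes x_k)=x_{\sigma^{-1}(1)}\otimes\cdots\otimes x_{\sigma^{-1}(k)}$, and $P_{\mathrm{Sym}_k(V)}=\frac1{k!}\sum_{\sigma\in\mathfrak S_k}U_\sigma$ is the symmetric projection. *)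

theory Defs
  imports "HOL-Analysis.Analysis" "HOL-Combinatorics.Permutations"
begin

text \<open>The tensor product V_A (x) V_B is real^('a * 'b); the space V_A (x) V_B^(x k) (k varying) is
  modelled by coefficient functions 'a => 'b list => real, supported on lists of length k.\<close>

definition proper_cone :: "(real^'n) set \<Rightarrow> bool" where
  "proper_cone C \<longleftrightarrow> convex C \<and> cone C \<and> C \<noteq> {} \<and> closed C
     \<and> (\<forall>v. v \<in> C \<and> - v \<in> C \<longrightarrow> v = 0)
     \<and> \<not> (\<exists>f. linear f \<and> f \<noteq> (\<lambda>_. 0) \<and> (\<forall>c\<in>C. f c = (0::real)))"

definition dual_cone :: "(real^'n) set \<Rightarrow> (real^'n \<Rightarrow> real) set" where
  "dual_cone C = {f. linear f \<and> (\<forall>c\<in>C. f c \<ge> 0)}"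

definition tensor_functional ::
  "(real^'a \<Rightarrow> real) \<Rightarrow> (real^'b \<Rightarrow> real) \<Rightarrow> real^('a \<times> 'b) \<Rightarrow> real" where
  "tensor_functional f g z = (\<Sum>i\<in>UNIV. \<Sum>j\<in>UNIV. f (axis i 1) * g (axis j 1) * z $ (i, j))"

definition max_tensor :: "(real^'a) set \<Rightarrow> (real^'b) set \<Rightarrow> (real^('a \<times> 'b)) set" where
  "max_tensor CA CB = {z. \<forall>f\<in>dual_cone CA. \<forall>g\<in>dual_cone CB. tensor_functional f g z \<ge> 0}"

definition elem_tensor :: "real^'a \<Rightarrow> (real^'b) list \<Rightarrow> 'a \<Rightarrow> 'b list \<Rightarrow> real" where
  "elem_tensor a bs = (\<lambda>i js. if length js = length bs
       then a $ i * (\<Prod>m<length bs. (bs ! m) $ (js ! m)) else 0)"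

definition conv_fun :: "('a \<Rightarrow> 'b list \<Rightarrow> real) set \<Rightarrow> ('a \<Rightarrow> 'b list \<Rightarrow> real) set" where
  "conv_fun S = {z. \<exists>(n::nat) c v. (\<forall>m<n. c m \<ge> (0::real) \<and> v m \<in> S)
       \<and> (\<Sum>m<n. c m) = 1 \<and> z = (\<lambda>i js. \<Sum>m<n. c m * v m i js)}"

definition min_tensor_pow ::
  "(real^'a) set \<Rightarrow> (real^'b) set \<Rightarrow> nat \<Rightarrow> ('a \<Rightarrow> 'b list \<Rightarrow> real) set" where
  "min_tensor_pow CA CB k = conv_fun {elem_tensor a bs | a bs. a \<in> CA \<and> length bs = k \<and> set bs \<subseteq> CB}"

text \<open>x (x) y^(x (k-1)) in V_A (x) V_B^(x k), where x \<in> V_A (x) V_B occupies V_A and the first V_B factor.\<close>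
definition x_tensor_ypow :: "real^('a::finite \<times> 'b::finite) \<Rightarrow> real^'b \<Rightarrow> nat \<Rightarrow> 'a \<Rightarrow> 'b list \<Rightarrow> real" where
  "x_tensor_ypow x y k = (\<lambda>i js. if length js = k \<and> k \<ge> 1
       then x $ (i, js ! 0) * (\<Prod>m\<in>{1..<k}. y $ (js ! m)) else 0)"

definition U_perm :: "nat \<Rightarrow> (nat \<Rightarrow> nat) \<Rightarrow> ('a \<Rightarrow> 'b list \<Rightarrow> real) \<Rightarrow> 'a \<Rightarrow> 'b list \<Rightarrow> real" where
  "U_perm k \<sigma> T = (\<lambda>i js. if length js = k then T i (map (\<lambda>m. js ! \<sigma> m) [0..<k]) else 0)"

definition id_tensor_sym_proj :: "nat \<Rightarrow> ('a \<Rightarrow> 'b list \<Rightarrow> real) \<Rightarrow> 'a \<Rightarrow> 'b list \<Rightarrow> real" where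
  "id_tensor_sym_proj k T = (\<lambda>i js. (1 / fact k) * (\<Sum>\<sigma>\<in>{\<sigma>. \<sigma> permutes {0..<k}}. U_perm k \<sigma> T i js))"

end

theory Submission
  imports Defs
begin


lemma bipolar:
  fixes C :: "(real^'n) set"
  assumes "convex C" "closed C" "cone C" "C \<noteq> {}"
    and H: "\<And>v. (\<forall>c\<in>C. 0 \<le> v \<bullet> c) \<Longrightarrow> 0 \<le> v \<bullet> p"
  shows "p \<in> C"
proof (rule ccontr)
  assume "p \<notin> C"
  then obtain a b where ab: "a \<bullet> p < b" "\<forall>x\<in>C. b < a \<bullet> x"
    using separating_hyperplane_closed_point assms(1,2) by blast
  obtain c0 where "c0 \<in> C" using assms(4) by blast
  then have "0 \<in> C" using assms(3) unfolding cone_def by (metis scaleR_zero_left order_refl)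
  then have b0: "b < 0" using ab by auto
  have "\<forall>c\<in>C. 0 \<le> a \<bullet> c"
  proof
    fix c assume c: "c \<in> C"
    show "0 \<le> a \<bullet> c"
    proof (rule ccontr)
      assume "\<not> 0 \<le> a \<bullet> c"
      then have neg: "a \<bullet> c < 0" by simp
      define l where "l = b / (a \<bullet> c)"
      have "l \<ge> 0" using neg b0 unfolding l_def by (simp add: divide_nonpos_neg)
      then have "l *\<^sub>R c \<in> C" using c assms(3) unfolding cone_def by blast
      moreover have "a \<bullet> (l *\<^sub>R c) = b" using neg unfolding l_def by simp
      ultimately show False using ab by fastforce
    qed
  qed
  then have "0 \<le> a \<bullet> p" by (rule H)
  then show False using ab b0 by simp
qed

lemma sum_in_conv_fun:
  assumes "finite T" "T \<noteq> {}" "\<forall>t\<in>T. v t \<in> S"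
    and sc: "\<forall>s\<in>S. \<forall>c::real. c \<ge> 0 \<longrightarrow> (\<lambda>i js. c * s i js) \<in> S"
  shows "(\<lambda>i js. \<Sum>t\<in>T. v t i js) \<in> conv_fun S"
proof -
  obtain h where h: "bij_betw h {0..<card T} T" using ex_bij_betw_nat_finite assms(1) by blast
  define N where "N = card T"
  have N0: "N > 0" using assms(1,2) unfolding N_def by (simp add: card_gt_0_iff)
  have eq: "(\<lambda>i js. \<Sum>t\<in>T. v t i js) = (\<lambda>i js. \<Sum>m<N. (1 / real N) * (real N * v (h m) i js))"
  proof (intro ext)
    fix i js
    have "(\<Sum>m<N. (1 / real N) * (real N * v (h m) i js)) = (\<Sum>m\<in>{0..<N}. v (h m) i js)"
      using N0 by (simp add: lessThan_atLeast0)
    also have "\<dots> = (\<Sum>t\<in>T. v t i js)"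
      using sum.reindex_bij_betw[OF h[folded N_def], of "\<lambda>t. v t i js"] by simp
    finally show "(\<Sum>t\<in>T. v t i js) = (\<Sum>m<N. (1 / real N) * (real N * v (h m) i js))" by simp
  qed
  have mem: "\<forall>m<N. (0::real) \<le> 1 / real N \<and> (\<lambda>i js. real N * v (h m) i js) \<in> S"
  proof (intro allI impI conjI)
    fix m assume "m < N"
    then have "h m \<in> T" using h unfolding N_def bij_betw_def by auto
    then show "(\<lambda>i js. real N * v (h m) i js) \<in> S" using sc assms(3) by auto
  qed simp
  have s1: "(\<Sum>m<N. 1 / real N) = 1" using N0 by simp
  show ?thesis unfolding conv_fun_def eq
    apply (rule CollectI)
    apply (rule exI[of _ N], rule exI[of _ "\<lambda>m. 1 / real N"], rule exI[of _ "\<lambda>m. \<lambda>i js. real N * v (h m) i js"])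
    using mem s1 by simp
qed

lemma sum_perm_apply:
  assumes "finite S" "a \<in> S"
  shows "(\<Sum>\<sigma>\<in>{\<sigma>. \<sigma> permutes S}. (\<Phi>::_\<Rightarrow>real) (\<sigma> a)) = fact (card S - 1) * (\<Sum>p\<in>S. \<Phi> p)"
proof -
  have eqb: "(\<Sum>\<sigma>\<in>{\<sigma>. \<sigma> permutes S}. \<Phi> (\<sigma> a)) = (\<Sum>\<sigma>\<in>{\<sigma>. \<sigma> permutes S}. \<Phi> (\<sigma> b))" if "b \<in> S" for b
    using sum_permutations_compose_right[OF permutes_swap_id[OF assms(2) that], of "\<lambda>\<sigma>. \<Phi> (\<sigma> a)"]
    by simp
  have "(\<Sum>b\<in>S. \<Sum>\<sigma>\<in>{\<sigma>. \<sigma> permutes S}. \<Phi> (\<sigma> b)) = (\<Sum>b\<in>S. \<Sum>\<sigma>\<in>{\<sigma>. \<sigma> permutes S}. \<Phi> (\<sigma> a))"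
    by (rule sum.cong[OF refl]) (simp add: eqb)
  then have "real (card S) * (\<Sum>\<sigma>\<in>{\<sigma>. \<sigma> permutes S}. \<Phi> (\<sigma> a)) = (\<Sum>b\<in>S. \<Sum>\<sigma>\<in>{\<sigma>. \<sigma> permutes S}. \<Phi> (\<sigma> b))"
    by simp
  also have "\<dots> = (\<Sum>\<sigma>\<in>{\<sigma>. \<sigma> permutes S}. \<Sum>b\<in>S. \<Phi> (\<sigma> b))" by (rule sum.swap)
  also have "\<dots> = (\<Sum>\<sigma>\<in>{\<sigma>. \<sigma> permutes S}. \<Sum>p\<in>S. \<Phi> p)"
  proof (rule sum.cong[OF refl])
    fix \<sigma> assume "\<sigma> \<in> {\<sigma>. \<sigma> permutes S}"
    then have "\<sigma> permutes S" by simp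
    then show "(\<Sum>b\<in>S. \<Phi> (\<sigma> b)) = (\<Sum>p\<in>S. \<Phi> p)"
      using sum.permute[of \<sigma> S \<Phi>] by (simp add: comp_def)
  qed
  also have "\<dots> = fact (card S) * (\<Sum>p\<in>S. \<Phi> p)"
    using card_permutations[OF refl assms(1)] by simp
  finally have *: "real (card S) * (\<Sum>\<sigma>\<in>{\<sigma>. \<sigma> permutes S}. \<Phi> (\<sigma> a)) = fact (card S) * (\<Sum>p\<in>S. \<Phi> p)" .
  have cS: "card S > 0" using assms by (auto simp: card_gt_0_iff)
  then have "fact (card S) = real (card S) * fact (card S - 1)"
    using fact_reduce by blast
  with * cS show ?thesis by simp
qed

lemma sym_formula:
  fixes x :: "real^('a::finite \<times> 'b::finite)" and y :: "real^'b"
  assumes len: "length js = k" and k1: "k \<ge> 1"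
  shows "id_tensor_sym_proj k (x_tensor_ypow x y k) i js
    = (1 / real k) * (\<Sum>p<k. x$(i, js!p) * (\<Prod>q\<in>{..<k}-{p}. y$(js!q)))"
proof -
  define \<Phi> where "\<Phi> p = x$(i, js!p) * (\<Prod>q\<in>{..<k}-{p}. y$(js!q))" for p
  have U: "U_perm k \<sigma> (x_tensor_ypow x y k) i js = \<Phi> (\<sigma> 0)" if \<sigma>: "\<sigma> permutes {0..<k}" for \<sigma>
  proof -
    have "U_perm k \<sigma> (x_tensor_ypow x y k) i js
        = x$(i, js ! \<sigma> 0) * (\<Prod>m\<in>{1..<k}. y $ (js ! \<sigma> m))"
      using len k1 unfolding U_perm_def x_tensor_ypow_def by simp
    also have "(\<Prod>m\<in>{1..<k}. y $ (js ! \<sigma> m)) = (\<Prod>q\<in>{..<k}-{\<sigma> 0}. y$(js!q))"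
    proof -
      have inj: "inj_on \<sigma> {1..<k}" using permutes_inj[OF \<sigma>] by (auto intro: inj_on_subset)
      have "\<sigma> ` {0..<k} = {0..<k}" using permutes_image[OF \<sigma>] .
      moreover have "{1..<k} = {0..<k} - {0}" by auto
      ultimately have "\<sigma> ` {1..<k} = {..<k} - {\<sigma> 0}"
        using permutes_inj[OF \<sigma>] by (simp add: image_set_diff lessThan_atLeast0)
      then show ?thesis using prod.reindex[OF inj, of "\<lambda>q. y$(js!q)"] by (simp add: comp_def)
    qed
    finally show ?thesis unfolding \<Phi>_def .
  qed
  have "id_tensor_sym_proj k (x_tensor_ypow x y k) i js
      = (1 / fact k) * (\<Sum>\<sigma>\<in>{\<sigma>. \<sigma> permutes {0..<k}}. \<Phi> (\<sigma> 0))"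
    unfolding id_tensor_sym_proj_def using U by simp
  also have "\<dots> = (1 / fact k) * (fact (k - 1) * (\<Sum>p\<in>{0..<k}. \<Phi> p))"
    using sum_perm_apply[of "{0..<k}" 0 \<Phi>] k1 by simp
  also have "\<dots> = (1 / real k) * (\<Sum>p<k. \<Phi> p)"
  proof -
    have "fact k = real k * fact (k - 1)" using fact_reduce[of k] k1 by simp
    then show ?thesis using k1 by (simp add: lessThan_atLeast0)
  qed
  finally show ?thesis unfolding \<Phi>_def .
qed

lemma sym_formula0:
  assumes "length js \<noteq> k"
  shows "id_tensor_sym_proj k T i js = 0"
  using assms unfolding id_tensor_sym_proj_def U_perm_def by simp




lemma expand_pos:
  fixes C :: "(nat \<Rightarrow> 'v) \<Rightarrow> 'v \<Rightarrow> real"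
  assumes fin: "finite G" "finite K" and p: "p \<in> K"
    and A: "\<And>t. (\<Sum>g\<in>G. C t g * F p g) = a"
    and Cdep: "\<And>t t'. (\<forall>q\<in>K-{p}. t q = t' q) \<Longrightarrow> C t = C t'"
  shows "a * (\<Prod>q\<in>K-{p}. \<Sum>g\<in>G. m g * F q g)
    = (\<Sum>t\<in>PiE K (\<lambda>_. G). (\<Prod>q\<in>K-{p}. m (t q)) * C t (t p) * (\<Prod>q\<in>K. F q (t q)))"
proof -
  let ?K' = "K - {p}"
  have Kins: "K = insert p ?K'" using p by auto
  have pn: "p \<notin> ?K'" by simp
  have fK': "finite ?K'" using fin by simp
  define f where "f t = (\<Prod>q\<in>K-{p}. m (t q)) * C t (t p) * (\<Prod>q\<in>K. F q (t q))" for t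
  have "(\<Sum>t\<in>PiE K (\<lambda>_. G). f t) = (\<Sum>t\<in>PiE (insert p ?K') (\<lambda>_. G). f t)"
    using Kins by simp
  also have "\<dots> = (\<Sum>t\<in>(\<lambda>(y, g). g(p := y)) ` (G \<times> PiE ?K' (\<lambda>_. G)). f t)"
    by (simp only: PiE_insert_eq)
  also have "\<dots> = (\<Sum>(g, t')\<in>G \<times> PiE ?K' (\<lambda>_. G). f (t'(p := g)))"
    by (subst sum.reindex[OF inj_combinator[OF pn]]) (simp add: case_prod_unfold)
  also have "\<dots> = (\<Sum>g\<in>G. \<Sum>t'\<in>PiE ?K' (\<lambda>_. G). f (t'(p := g)))"
    by (rule sum.cartesian_product[symmetric])
  also have "\<dots> = (\<Sum>g\<in>G. \<Sum>t'\<in>PiE ?K' (\<lambda>_. G).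
        (\<Prod>q\<in>?K'. m (t' q) * F q (t' q)) * (C t' g * F p g))"
  proof (intro sum.cong refl)
    fix g t' assume "g \<in> G" "t' \<in> PiE ?K' (\<lambda>_. G)"
    have c: "C (t'(p := g)) = C t'" by (rule Cdep) simp
    have p1: "(\<Prod>q\<in>?K'. m ((t'(p := g)) q)) = (\<Prod>q\<in>?K'. m (t' q))"
      by (rule prod.cong) auto
    have p2: "(\<Prod>q\<in>K. F q ((t'(p := g)) q)) = F p g * (\<Prod>q\<in>?K'. F q (t' q))"
    proof -
      have "(\<Prod>q\<in>K. F q ((t'(p := g)) q)) = (\<Prod>q\<in>insert p ?K'. F q ((t'(p := g)) q))"
        using Kins by simp
      also have "\<dots> = F p g * (\<Prod>q\<in>?K'. F q ((t'(p := g)) q))"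
        by (subst prod.insert[OF fK' pn]) simp
      also have "(\<Prod>q\<in>?K'. F q ((t'(p := g)) q)) = (\<Prod>q\<in>?K'. F q (t' q))"
        by (rule prod.cong) auto
      finally show ?thesis .
    qed
    show "f (t'(p := g)) = (\<Prod>q\<in>?K'. m (t' q) * F q (t' q)) * (C t' g * F p g)"
      unfolding f_def c p1 p2 by (simp add: prod.distrib mult_ac)
  qed
  also have "\<dots> = (\<Sum>t'\<in>PiE ?K' (\<lambda>_. G). (\<Prod>q\<in>?K'. m (t' q) * F q (t' q)) * (\<Sum>g\<in>G. C t' g * F p g))"
    by (subst sum.swap) (simp add: sum_distrib_left)
  also have "\<dots> = (\<Sum>t'\<in>PiE ?K' (\<lambda>_. G). (\<Prod>q\<in>?K'. m (t' q) * F q (t' q))) * a"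
    by (simp add: A sum_distrib_right)
  also have "(\<Sum>t'\<in>PiE ?K' (\<lambda>_. G). (\<Prod>q\<in>?K'. m (t' q) * F q (t' q))) = (\<Prod>q\<in>?K'. \<Sum>g\<in>G. m g * F q g)"
    by (rule prod_sum_PiE[symmetric]) (use fin in auto)
  finally show ?thesis unfolding f_def by (simp add: mult_ac)
qed




lemma vec_axis_expand: "(\<Sum>l\<in>UNIV. (d$l) *\<^sub>R axis l (1::real)) = (d::real^'n)"
  by (simp add: vec_eq_iff axis_def if_distrib sum.delta cong: if_cong)

lemma grid_rep:
  fixes C :: "(real^'n) set" and \<Lambda> \<rho> :: real and w :: "real^'n"
  assumes rho: "\<rho> > 0" and w: "cball w \<rho> \<subseteq> C"
  defines "n \<equiv> real CARD('n)"
  defines "h \<equiv> \<rho> / (4 * n)"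
  defines "gp \<equiv> (\<lambda>z::'n\<Rightarrow>int. (\<chi> l. h * of_int (z l)) :: real^'n)"
  shows "\<exists>vp vm \<alpha> \<beta>. (\<forall>l. vp l \<in> C \<and> vm l \<in> C \<and> norm (vp l) \<le> norm w + \<rho> \<and> norm (vm l) \<le> norm w + \<rho>
      \<and> (\<exists>z. vp l = gp z) \<and> (\<exists>z. vm l = gp z) \<and> 0 \<le> \<alpha> l \<and> 0 \<le> \<beta> l
      \<and> vp l - vm l = (2 * n * h) *\<^sub>R axis l 1)
      \<and> (\<Sum>l\<in>UNIV. \<alpha> l + \<beta> l) = 1
      \<and> w = (\<Sum>l\<in>UNIV. \<alpha> l *\<^sub>R vp l + \<beta> l *\<^sub>R vm l)"
proof -
  have n1: "n \<ge> 1" unfolding n_def by simp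
  have h0: "h > 0" unfolding h_def using rho n1 by simp
  define z0 where "z0 = (\<lambda>l. \<lfloor>w$l / h\<rfloor>)"
  define q where "q = gp z0"
  define d where "d = w - q"
  have d0: "0 \<le> d$l" "d$l \<le> h" for l
  proof -
    have "of_int \<lfloor>w$l / h\<rfloor> * h \<le> w$l" using floor_divide_lower[OF h0] .
    moreover have "w$l < (of_int \<lfloor>w$l / h\<rfloor> + 1) * h" using floor_divide_upper[OF h0] .
    ultimately show "0 \<le> d$l" "d$l \<le> h"
      unfolding d_def q_def gp_def z0_def by (auto simp: algebra_simps)
  qed
  define N where "N = n * h"
  have N0: "N > 0" unfolding N_def using n1 h0 by simp
  define vp where "vp l = q + N *\<^sub>R axis l 1" for l
  define vm where "vm l = q - N *\<^sub>R axis l 1" for l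
  have nq: "norm (q - w) \<le> n * h"
  proof -
    have "norm (q - w) = norm d" unfolding d_def by (simp add: norm_minus_commute)
    also have "\<dots> \<le> (\<Sum>l\<in>UNIV. \<bar>d$l\<bar>)" by (rule norm_le_l1_cart)
    also have "\<dots> \<le> (\<Sum>l\<in>(UNIV::'n set). h)" by (rule sum_mono) (use d0 in auto)
    finally show ?thesis unfolding n_def by simp
  qed
  have close: "norm (vp l - w) \<le> \<rho> / 2" "norm (vm l - w) \<le> \<rho> / 2" for l
  proof -
    have "norm (vp l - w) \<le> norm (q - w) + norm (N *\<^sub>R axis l (1::real))"
      unfolding vp_def by (metis add_diff_eq diff_add_eq norm_triangle_ineq add.commute)
    also have "\<dots> \<le> n * h + N" using nq N0 by simp
    also have "\<dots> = \<rho> / 2" unfolding N_def h_def using n1 by simp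
    finally show "norm (vp l - w) \<le> \<rho> / 2" .
    have "norm (vm l - w) \<le> norm (q - w) + norm (N *\<^sub>R axis l (1::real))"
      unfolding vm_def by (metis diff_diff_eq2 diff_add_eq norm_triangle_ineq4 add.commute diff_diff_add)
    also have "\<dots> \<le> n * h + N" using nq N0 by simp
    also have "\<dots> = \<rho> / 2" unfolding N_def h_def using n1 by simp
    finally show "norm (vm l - w) \<le> \<rho> / 2" .
  qed
  have inC: "vp l \<in> C" "vm l \<in> C" for l
    using close[of l] w rho by (auto simp: dist_norm norm_minus_commute subset_iff)
  have nrm: "norm (vp l) \<le> norm w + \<rho>" "norm (vm l) \<le> norm w + \<rho>" for l
  proof -
    have "norm (vp l) \<le> norm w + norm (vp l - w)" by (metis add_diff_cancel_left' norm_triangle_ineq add.commute diff_add_cancel)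
    then show "norm (vp l) \<le> norm w + \<rho>" using close[of l] rho by simp
    have "norm (vm l) \<le> norm w + norm (vm l - w)" by (metis add_diff_cancel_left' norm_triangle_ineq add.commute diff_add_cancel)
    then show "norm (vm l) \<le> norm w + \<rho>" using close[of l] rho by simp
  qed
  have cardN: "N = h * of_int (int CARD('n))" unfolding N_def n_def by simp
  have grp: "\<exists>z. vp l = gp z" "\<exists>z. vm l = gp z" for l
  proof -
    show "\<exists>z. vp l = gp z"
      by (rule exI[of _ "\<lambda>l'. z0 l' + (if l' = l then int CARD('n) else 0)"])
         (simp add: vp_def q_def gp_def vec_eq_iff axis_def cardN algebra_simps)
    show "\<exists>z. vm l = gp z"
      by (rule exI[of _ "\<lambda>l'. z0 l' - (if l' = l then int CARD('n) else 0)"])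
         (simp add: vm_def q_def gp_def vec_eq_iff axis_def cardN algebra_simps)
  qed
  define \<alpha> where "\<alpha> l = 1 / (2 * n) + d$l / (2 * N)" for l
  define \<beta> where "\<beta> l = 1 / (2 * n) - d$l / (2 * N)" for l
  have ab0: "0 \<le> \<alpha> l" "0 \<le> \<beta> l" for l
  proof -
    show "0 \<le> \<alpha> l" unfolding \<alpha>_def using d0[of l] n1 N0 by simp
    have "d$l / (2 * N) \<le> h / (2 * N)" using d0[of l] N0 by (simp add: divide_right_mono)
    also have "\<dots> = 1 / (2 * n)" unfolding N_def using h0 n1 by simp
    finally show "0 \<le> \<beta> l" unfolding \<beta>_def by simp
  qed
  have sum1: "(\<Sum>l\<in>UNIV. \<alpha> l + \<beta> l) = 1" unfolding \<alpha>_def \<beta>_def n_def by simp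
  have rep: "w = (\<Sum>l\<in>UNIV. \<alpha> l *\<^sub>R vp l + \<beta> l *\<^sub>R vm l)"
  proof -
    have "(\<Sum>l\<in>UNIV. \<alpha> l *\<^sub>R vp l + \<beta> l *\<^sub>R vm l)
        = (\<Sum>l\<in>UNIV. (\<alpha> l + \<beta> l) *\<^sub>R q + ((\<alpha> l - \<beta> l) * N) *\<^sub>R axis l 1)"
      unfolding vp_def vm_def by (rule sum.cong) (auto simp: algebra_simps)
    also have "\<dots> = (\<Sum>l\<in>UNIV. \<alpha> l + \<beta> l) *\<^sub>R q + (\<Sum>l\<in>UNIV. (d$l) *\<^sub>R axis l 1)"
    proof -
      have "(\<alpha> l - \<beta> l) * N = d$l" for l unfolding \<alpha>_def \<beta>_def using N0 by (simp add: field_simps)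
      then show ?thesis by (simp add: sum.distrib scaleR_sum_left[symmetric])
    qed
    also have "\<dots> = q + d" using sum1 vec_axis_expand by simp
    finally show ?thesis unfolding d_def by simp
  qed
  have diff: "vp l - vm l = (2 * n * h) *\<^sub>R axis l 1" for l
  proof -
    have "vp l - vm l = N *\<^sub>R axis l 1 + N *\<^sub>R axis l 1" by (simp add: vp_def vm_def)
    also have "\<dots> = (2 * N) *\<^sub>R axis l 1" by (metis mult_2 scaleR_left_distrib)
    finally show ?thesis unfolding N_def by (simp add: mult.assoc)
  qed
  have A: "\<forall>l. vp l \<in> C \<and> vm l \<in> C \<and> norm (vp l) \<le> norm w + \<rho> \<and> norm (vm l) \<le> norm w + \<rho>
      \<and> (\<exists>z. vp l = gp z) \<and> (\<exists>z. vm l = gp z) \<and> 0 \<le> \<alpha> l \<and> 0 \<le> \<beta> l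
      \<and> vp l - vm l = (2 * n * h) *\<^sub>R axis l 1"
    using inC nrm grp ab0 diff by simp
  show ?thesis
    by (rule exI[of _ vp], rule exI[of _ vm], rule exI[of _ \<alpha>], rule exI[of _ \<beta>], intro conjI A sum1 rep)
qed

lemma sum_delta_scaleR:
  fixes p :: "'l::finite \<Rightarrow> 'v::real_vector"
  assumes "finite G" "\<And>l. p l \<in> G"
  shows "(\<Sum>g\<in>G. (\<Sum>l\<in>UNIV. if g = p l then \<alpha> l else 0) *\<^sub>R g) = (\<Sum>l\<in>UNIV. \<alpha> l *\<^sub>R p l)"
proof -
  have "(\<Sum>g\<in>G. (\<Sum>l\<in>UNIV. if g = p l then \<alpha> l else 0) *\<^sub>R g)
      = (\<Sum>g\<in>G. \<Sum>l\<in>UNIV. if g = p l then \<alpha> l *\<^sub>R g else 0)"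
    by (simp only: scaleR_sum_left if_distrib[of "\<lambda>c. c *\<^sub>R _"] scaleR_zero_left)
  also have "\<dots> = (\<Sum>l\<in>UNIV. \<Sum>g\<in>G. if g = p l then \<alpha> l *\<^sub>R g else 0)"
    by (rule sum.swap)
  also have "\<dots> = (\<Sum>l\<in>UNIV. \<alpha> l *\<^sub>R p l)"
    by (rule sum.cong[OF refl]) (simp add: sum.delta[OF assms(1)] assms(2))
  finally show ?thesis .
qed

lemma grid:
  fixes C :: "(real^'n) set" and \<Lambda> \<rho> :: real and y :: "real^'n"
  assumes rho: "\<rho> > 0" and y: "cball y \<rho> \<subseteq> C" "norm y \<le> \<Lambda>"
  shows "\<exists>G. finite G \<and> G \<subseteq> C
    \<and> (\<forall>w. cball w \<rho> \<subseteq> C \<and> norm w \<le> \<Lambda> \<longrightarrow>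
          (\<exists>\<alpha>. (\<forall>g\<in>G. 0 \<le> \<alpha> g \<and> \<alpha> g \<le> 1) \<and> w = (\<Sum>g\<in>G. \<alpha> g *\<^sub>R g)))
    \<and> (\<exists>\<eta>>0. \<exists>gp gm. \<forall>l. gp l \<in> G \<and> gm l \<in> G \<and> gp l - gm l = \<eta> *\<^sub>R axis l 1)"
proof -
  define n where "n = real CARD('n)"
  define h where "h = \<rho> / (4 * n)"
  define gp where "gp = (\<lambda>z::'n\<Rightarrow>int. (\<chi> l. h * of_int (z l)) :: real^'n)"
  have n1: "n \<ge> 1" unfolding n_def by simp
  have h0: "h > 0" unfolding h_def using rho n1 by simp
  define G where "G = {g\<in>C. norm g \<le> \<Lambda> + \<rho> \<and> (\<exists>z. g = gp z)}"
  define L where "L = \<lceil>(\<Lambda> + \<rho>) / h\<rceil>"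
  have fin: "finite G"
  proof (rule finite_subset)
    show "G \<subseteq> gp ` (PiE UNIV (\<lambda>_. {-L..L}))"
    proof
      fix g assume "g \<in> G"
      then obtain z where g: "g = gp z" "norm g \<le> \<Lambda> + \<rho>" unfolding G_def by auto
      have "z l \<in> {-L..L}" for l
      proof -
        have "\<bar>h * of_int (z l)\<bar> \<le> \<Lambda> + \<rho>"
          using component_le_norm_cart[of g l] g unfolding gp_def by simp
        then have "of_int \<bar>z l\<bar> \<le> (\<Lambda> + \<rho>) / h" using h0 by (simp add: abs_mult field_simps)
        also have "\<dots> \<le> of_int L" unfolding L_def by simp
        finally have "\<bar>z l\<bar> \<le> L" by linarith
        then show ?thesis by auto
      qed
      then show "g \<in> gp ` (PiE UNIV (\<lambda>_. {-L..L}))" using g by (auto simp: PiE_UNIV_domain)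
    qed
    show "finite (gp ` (PiE UNIV (\<lambda>_. {-L..L})))" by (intro finite_imageI finite_PiE) auto
  qed
  have rep: "\<exists>\<alpha>. (\<forall>g\<in>G. 0 \<le> \<alpha> g \<and> \<alpha> g \<le> 1) \<and> w = (\<Sum>g\<in>G. \<alpha> g *\<^sub>R g)"
    if w: "cball w \<rho> \<subseteq> C" "norm w \<le> \<Lambda>" for w
  proof -
    obtain vp vm \<alpha> \<beta> where P: "\<forall>l. vp l \<in> C \<and> vm l \<in> C \<and> norm (vp l) \<le> norm w + \<rho> \<and> norm (vm l) \<le> norm w + \<rho>
      \<and> (\<exists>z. vp l = gp z) \<and> (\<exists>z. vm l = gp z) \<and> 0 \<le> \<alpha> l \<and> 0 \<le> \<beta> l
      \<and> vp l - vm l = (2 * n * h) *\<^sub>R axis l 1"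
      and S1: "(\<Sum>l\<in>UNIV. \<alpha> l + \<beta> l) = 1"
      and W: "w = (\<Sum>l\<in>UNIV. \<alpha> l *\<^sub>R vp l + \<beta> l *\<^sub>R vm l)"
      using grid_rep[OF rho w(1)] unfolding n_def h_def gp_def by blast
    have inG: "vp l \<in> G" "vm l \<in> G" for l using spec[OF P, of l] w(2) unfolding G_def by auto
    define a1 where "a1 g = (\<Sum>l\<in>UNIV. if g = vp l then \<alpha> l else 0)" for g
    define a2 where "a2 g = (\<Sum>l\<in>UNIV. if g = vm l then \<beta> l else 0)" for g
    define a where "a g = a1 g + a2 g" for g
    have "(\<Sum>g\<in>G. a g *\<^sub>R g) = (\<Sum>g\<in>G. a1 g *\<^sub>R g) + (\<Sum>g\<in>G. a2 g *\<^sub>R g)"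
      unfolding a_def by (simp only: scaleR_add_left sum.distrib)
    also have "\<dots> = (\<Sum>l\<in>UNIV. \<alpha> l *\<^sub>R vp l) + (\<Sum>l\<in>UNIV. \<beta> l *\<^sub>R vm l)"
      unfolding a1_def a2_def using sum_delta_scaleR[of G vp \<alpha>, OF fin inG(1)] sum_delta_scaleR[of G vm \<beta>, OF fin inG(2)] by simp
    also have "\<dots> = (\<Sum>l\<in>UNIV. \<alpha> l *\<^sub>R vp l + \<beta> l *\<^sub>R vm l)" by (simp only: sum.distrib)
    finally have eq: "w = (\<Sum>g\<in>G. a g *\<^sub>R g)" using W by simp
    have bnd: "0 \<le> a g \<and> a g \<le> 1" for g
    proof
      have al: "0 \<le> \<alpha> l" "0 \<le> \<beta> l" for l using spec[OF P, of l] by auto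
      show "0 \<le> a g" unfolding a_def a1_def a2_def using al by (intro add_nonneg_nonneg sum_nonneg) auto
      have "a1 g \<le> (\<Sum>l\<in>UNIV. \<alpha> l)" unfolding a1_def using al by (intro sum_mono) auto
      moreover have "a2 g \<le> (\<Sum>l\<in>UNIV. \<beta> l)" unfolding a2_def using al by (intro sum_mono) auto
      ultimately have "a g \<le> (\<Sum>l\<in>UNIV. \<alpha> l + \<beta> l)" unfolding a_def by (simp add: sum.distrib)
      then show "a g \<le> 1" using S1 by simp
    qed
    show ?thesis by (rule exI[of _ a]) (use eq bnd in simp)
  qed
  obtain vp vm \<alpha> \<beta> where P: "\<forall>l. vp l \<in> C \<and> vm l \<in> C \<and> norm (vp l) \<le> norm y + \<rho> \<and> norm (vm l) \<le> norm y + \<rho>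
      \<and> (\<exists>z. vp l = gp z) \<and> (\<exists>z. vm l = gp z) \<and> 0 \<le> \<alpha> l \<and> 0 \<le> \<beta> l
      \<and> vp l - vm l = (2 * n * h) *\<^sub>R axis l 1"
      and "(\<Sum>l\<in>UNIV. \<alpha> l + \<beta> l) = 1"
      and "y = (\<Sum>l\<in>UNIV. \<alpha> l *\<^sub>R vp l + \<beta> l *\<^sub>R vm l)"
    using grid_rep[OF rho y(1)] unfolding n_def h_def gp_def by blast
  have eta: "\<exists>\<eta>>0. \<exists>gp gm. \<forall>l. gp l \<in> G \<and> gm l \<in> G \<and> gp l - gm l = \<eta> *\<^sub>R axis l 1"
  proof (rule exI[of _ "2 * n * h"], intro conjI exI allI)
    show "0 < 2 * n * h" using h0 n1 by simp
    fix l
    show "vp l \<in> G" "vm l \<in> G" "vp l - vm l = (2 * n * h) *\<^sub>R axis l 1"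
      using spec[OF P, of l] y(2) unfolding G_def by auto
  qed
  have sub: "G \<subseteq> C" unfolding G_def by auto
  show ?thesis
  proof (intro exI[of _ G] conjI allI impI)
    show "finite G" by (rule fin)
    show "G \<subseteq> C" by (rule sub)
    fix w assume "cball w \<rho> \<subseteq> C \<and> norm w \<le> \<Lambda>"
    then show "\<exists>\<alpha>. (\<forall>g\<in>G. 0 \<le> \<alpha> g \<and> \<alpha> g \<le> 1) \<and> w = (\<Sum>g\<in>G. \<alpha> g *\<^sub>R g)"
      using rep by blast
  next
    show "\<exists>\<eta>>0. \<exists>gp gm. \<forall>l. gp l \<in> G \<and> gm l \<in> G \<and> gp l - gm l = \<eta> *\<^sub>R axis l 1" by (rule eta)
  qed
qed




definition rr :: "('n \<Rightarrow> real^'n) \<Rightarrow> ('n \<Rightarrow> real^'n) \<Rightarrow> real \<Rightarrow> 'n \<Rightarrow> real^'n \<Rightarrow> real" where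
  "rr gp gm \<eta> l g = (if g = gp l then 1 / \<eta> else 0) - (if g = gm l then 1 / \<eta> else 0)"

definition Rm :: "('n \<Rightarrow> real^'n) \<Rightarrow> ('n \<Rightarrow> real^'n) \<Rightarrow> real \<Rightarrow> real^'n \<Rightarrow> real^'n \<Rightarrow> real" where
  "Rm gp gm \<eta> v g = (\<Sum>l\<in>UNIV. v$l * rr gp gm \<eta> l g)"

lemma rr_sum:
  assumes "finite G" "gp l \<in> G" "gm l \<in> G" "gp l - gm l = \<eta> *\<^sub>R axis l 1" "\<eta> > 0"
  shows "(\<Sum>g\<in>G. rr gp gm \<eta> l g *\<^sub>R g) = axis l 1"
proof -
  have "(\<Sum>g\<in>G. rr gp gm \<eta> l g *\<^sub>R g)
      = (\<Sum>g\<in>G. if g = gp l then (1/\<eta>) *\<^sub>R g else 0) - (\<Sum>g\<in>G. if g = gm l then (1/\<eta>) *\<^sub>R g else 0)"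
    unfolding rr_def scaleR_diff_left sum_subtractf
    by (intro arg_cong2[where f="(-)"] sum.cong refl) simp_all
  also have "\<dots> = (1/\<eta>) *\<^sub>R gp l - (1/\<eta>) *\<^sub>R gm l"
    by (simp add: sum.delta[OF assms(1)] assms(2,3))
  also have "\<dots> = (1/\<eta>) *\<^sub>R (gp l - gm l)" by (simp add: scaleR_diff_right)
  also have "\<dots> = axis l 1" using assms(4,5) by simp
  finally show ?thesis .
qed

lemma Rm_sum:
  assumes "finite G" "\<forall>l. gp l \<in> G \<and> gm l \<in> G \<and> gp l - gm l = \<eta> *\<^sub>R axis l 1" "\<eta> > 0"
  shows "(\<Sum>g\<in>G. Rm gp gm \<eta> v g *\<^sub>R g) = v"
proof -
  have "(\<Sum>g\<in>G. Rm gp gm \<eta> v g *\<^sub>R g) = (\<Sum>g\<in>G. \<Sum>l\<in>UNIV. (v$l * rr gp gm \<eta> l g) *\<^sub>R g)"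
    unfolding Rm_def by (simp only: scaleR_sum_left)
  also have "\<dots> = (\<Sum>l\<in>UNIV. \<Sum>g\<in>G. (v$l * rr gp gm \<eta> l g) *\<^sub>R g)" by (rule sum.swap)
  also have "\<dots> = (\<Sum>l\<in>UNIV. v$l *\<^sub>R (\<Sum>g\<in>G. rr gp gm \<eta> l g *\<^sub>R g))"
    by (simp only: scaleR_sum_right scaleR_scaleR)
  also have "\<dots> = (\<Sum>l\<in>UNIV. v$l *\<^sub>R axis l 1)"
    using rr_sum[OF assms(1)] assms(2,3) by simp
  also have "\<dots> = v" by (simp add: vec_eq_iff axis_def if_distrib sum.delta cong: if_cong)
  finally show ?thesis .
qed

lemma Rm_lin:
  assumes "finite H"
  shows "Rm gp gm \<eta> (\<Sum>h\<in>H. a h *\<^sub>R h) g = (\<Sum>h\<in>H. a h * Rm gp gm \<eta> h g)"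
proof -
  have "Rm gp gm \<eta> (\<Sum>h\<in>H. a h *\<^sub>R h) g = (\<Sum>l\<in>UNIV. (\<Sum>h\<in>H. a h * h$l) * rr gp gm \<eta> l g)"
    unfolding Rm_def by (simp add: sum_component)
  also have "\<dots> = (\<Sum>l\<in>UNIV. \<Sum>h\<in>H. a h * (h$l * rr gp gm \<eta> l g))"
    by (simp add: sum_distrib_right mult.assoc)
  also have "\<dots> = (\<Sum>h\<in>H. \<Sum>l\<in>UNIV. a h * (h$l * rr gp gm \<eta> l g))" by (rule sum.swap)
  also have "\<dots> = (\<Sum>h\<in>H. a h * Rm gp gm \<eta> h g)"
    unfolding Rm_def by (simp add: sum_distrib_left)
  finally show ?thesis .
qed

definition dlt :: "(real^'n) set \<Rightarrow> (real^'n \<Rightarrow> real^'n \<Rightarrow> real) \<Rightarrow> (real^'n \<Rightarrow> real) \<Rightarrow> real^'n \<Rightarrow> real" where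
  "dlt G Rf \<nu> h = \<nu> h - (\<Sum>g\<in>G. \<nu> g * Rf h g)"

definition rho :: "(real^'n) set \<Rightarrow> (real^'n \<Rightarrow> real^'n \<Rightarrow> real) \<Rightarrow> (real^'n \<Rightarrow> real) \<Rightarrow> real^'n \<Rightarrow> real" where
  "rho G Rf \<nu> g = dlt G Rf \<nu> g - Rf (\<Sum>h\<in>G. dlt G Rf \<nu> h *\<^sub>R h) g"

lemma rho_F1:
  assumes Rsum: "\<And>v. (\<Sum>g\<in>G. Rf v g *\<^sub>R g) = v"
  shows "(\<Sum>g\<in>G. rho G Rf \<nu> g *\<^sub>R g) = 0"
proof -
  have "(\<Sum>g\<in>G. rho G Rf \<nu> g *\<^sub>R g) = (\<Sum>g\<in>G. dlt G Rf \<nu> g *\<^sub>R g) - (\<Sum>g\<in>G. Rf (\<Sum>h\<in>G. dlt G Rf \<nu> h *\<^sub>R h) g *\<^sub>R g)"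
    unfolding rho_def by (simp add: scaleR_diff_left sum_subtractf)
  also have "\<dots> = 0" by (simp add: Rsum)
  finally show ?thesis .
qed

lemma rho_pair:
  assumes fin: "finite G" and Rlin: "\<And>a g. Rf (\<Sum>h\<in>G. a h *\<^sub>R h) g = (\<Sum>h\<in>G. a h * Rf h g)"
  shows "(\<Sum>g\<in>G. \<nu> g * Rf (\<Sum>h\<in>G. \<kappa> h *\<^sub>R h) g) = (\<Sum>h\<in>G. \<kappa> h * (\<nu> h - dlt G Rf \<nu> h))"
proof -
  have "(\<Sum>g\<in>G. \<nu> g * Rf (\<Sum>h\<in>G. \<kappa> h *\<^sub>R h) g) = (\<Sum>g\<in>G. \<Sum>h\<in>G. \<kappa> h * (\<nu> g * Rf h g))"
    by (simp add: Rlin sum_distrib_left mult_ac)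
  also have "\<dots> = (\<Sum>h\<in>G. \<Sum>g\<in>G. \<kappa> h * (\<nu> g * Rf h g))" by (rule sum.swap)
  also have "\<dots> = (\<Sum>h\<in>G. \<kappa> h * (\<nu> h - dlt G Rf \<nu> h))"
    unfolding dlt_def by (simp add: sum_distrib_left)
  finally show ?thesis .
qed

lemma rho_F2:
  assumes fin: "finite G" and Rlin: "\<And>a g. Rf (\<Sum>h\<in>G. a h *\<^sub>R h) g = (\<Sum>h\<in>G. a h * Rf h g)"
  shows "(\<Sum>g\<in>G. \<nu> g * rho G Rf \<nu> g) = (\<Sum>h\<in>G. (dlt G Rf \<nu> h)^2)"
proof -
  have "(\<Sum>g\<in>G. \<nu> g * rho G Rf \<nu> g) = (\<Sum>g\<in>G. \<nu> g * dlt G Rf \<nu> g) - (\<Sum>g\<in>G. \<nu> g * Rf (\<Sum>h\<in>G. dlt G Rf \<nu> h *\<^sub>R h) g)"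
    unfolding rho_def by (simp add: right_diff_distrib sum_subtractf)
  also have "(\<Sum>g\<in>G. \<nu> g * Rf (\<Sum>h\<in>G. dlt G Rf \<nu> h *\<^sub>R h) g) = (\<Sum>h\<in>G. dlt G Rf \<nu> h * (\<nu> h - dlt G Rf \<nu> h))"
    by (rule rho_pair[OF fin Rlin])
  also have "(\<Sum>g\<in>G. \<nu> g * dlt G Rf \<nu> g) - (\<Sum>h\<in>G. dlt G Rf \<nu> h * (\<nu> h - dlt G Rf \<nu> h)) = (\<Sum>h\<in>G. (dlt G Rf \<nu> h)^2)"
    by (simp add: right_diff_distrib sum_subtractf power2_eq_square mult.commute)
  finally show ?thesis .
qed

lemma dlt_lin: "dlt G Rf (\<lambda>g. \<nu>1 g - s * \<nu>2 g) h = dlt G Rf \<nu>1 h - s * dlt G Rf \<nu>2 h"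
  unfolding dlt_def by (simp add: algebra_simps sum_subtractf sum_distrib_left)

lemma rho_lin:
  assumes fin: "finite G" and Rlin: "\<And>a g. Rf (\<Sum>h\<in>G. a h *\<^sub>R h) g = (\<Sum>h\<in>G. a h * Rf h g)"
  shows "rho G Rf (\<lambda>g. \<nu>1 g - s * \<nu>2 g) g = rho G Rf \<nu>1 g - s * rho G Rf \<nu>2 g"
proof -
  have "Rf (\<Sum>h\<in>G. dlt G Rf (\<lambda>g. \<nu>1 g - s * \<nu>2 g) h *\<^sub>R h) g
      = (\<Sum>h\<in>G. dlt G Rf (\<lambda>g. \<nu>1 g - s * \<nu>2 g) h * Rf h g)" by (rule Rlin)
  also have "\<dots> = (\<Sum>h\<in>G. dlt G Rf \<nu>1 h * Rf h g) - s * (\<Sum>h\<in>G. dlt G Rf \<nu>2 h * Rf h g)"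
    by (simp add: dlt_lin algebra_simps sum_subtractf sum_distrib_left)
  also have "(\<Sum>h\<in>G. dlt G Rf \<nu>1 h * Rf h g) = Rf (\<Sum>h\<in>G. dlt G Rf \<nu>1 h *\<^sub>R h) g" by (rule Rlin[symmetric])
  also have "(\<Sum>h\<in>G. dlt G Rf \<nu>2 h * Rf h g) = Rf (\<Sum>h\<in>G. dlt G Rf \<nu>2 h *\<^sub>R h) g" by (rule Rlin[symmetric])
  finally have *: "Rf (\<Sum>h\<in>G. dlt G Rf (\<lambda>g. \<nu>1 g - s * \<nu>2 g) h *\<^sub>R h) g
      = Rf (\<Sum>h\<in>G. dlt G Rf \<nu>1 h *\<^sub>R h) g - s * Rf (\<Sum>h\<in>G. dlt G Rf \<nu>2 h *\<^sub>R h) g" .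
  show ?thesis unfolding rho_def by (subst *) (simp add: dlt_lin algebra_simps)
qed




lemma amgm_term:
  fixes a b t :: real assumes "t > 0"
  shows "a * b \<le> a^2 / (4 * t) + t * b^2"
proof -
  have "0 \<le> (a - 2 * t * b)^2" by simp
  then have "4 * t * (a * b) \<le> a^2 + 4 * t^2 * b^2" by (simp add: power2_eq_square algebra_simps)
  then have "a * b \<le> (a^2 + 4 * t^2 * b^2) / (4 * t)" using assms by (simp add: pos_le_divide_eq mult.commute)
  also have "\<dots> = a^2 / (4 * t) + t * b^2" using assms by (simp add: field_simps power2_eq_square)
  finally show ?thesis .
qed

lemma key_ineq:
  fixes \<kappa> \<nu> \<delta> :: "'v \<Rightarrow> real"
  assumes fin: "finite G" and th: "\<theta> > 0" and U: "U > 0"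
    and kl: "\<And>h. h\<in>G \<Longrightarrow> cs \<le> \<kappa> h" and ku: "\<And>h. h\<in>G \<Longrightarrow> \<kappa> h \<le> Cs" and cs0: "cs \<ge> 0"
    and nu: "\<And>h. h\<in>G \<Longrightarrow> 0 \<le> \<nu> h"
    and A1: "real (card G) * Cs^2 \<le> 2 * \<theta> * U * cs * (\<Sum>h\<in>G. \<nu> h)"
    and A2: "2 * \<theta> * U * err \<le> cs * (\<Sum>h\<in>G. \<nu> h)"
  shows "0 \<le> (\<Sum>h\<in>G. \<kappa> h * \<nu> h) - (\<Sum>h\<in>G. \<kappa> h * \<delta> h) + \<theta> * U * ((\<Sum>h\<in>G. (\<delta> h)^2) - err)"
proof -
  define t where "t = \<theta> * U"
  have t0: "t > 0" unfolding t_def using th U by simp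
  have s1: "(\<Sum>h\<in>G. \<kappa> h * \<nu> h) \<ge> cs * (\<Sum>h\<in>G. \<nu> h)"
    unfolding sum_distrib_left by (rule sum_mono) (use kl nu in \<open>simp add: mult_right_mono\<close>)
  have s2: "(\<Sum>h\<in>G. \<kappa> h * \<delta> h) \<le> (\<Sum>h\<in>G. (\<kappa> h)^2 / (4 * t) + t * (\<delta> h)^2)"
    by (rule sum_mono) (rule amgm_term[OF t0])
  have s3: "(\<Sum>h\<in>G. (\<kappa> h)^2 / (4 * t)) \<le> (\<Sum>h\<in>G. Cs^2 / (4 * t))"
  proof (rule sum_mono)
    fix h assume h: "h \<in> G"
    have "0 \<le> \<kappa> h" using kl[OF h] cs0 by simp
    then have "(\<kappa> h)^2 \<le> Cs^2" using ku[OF h] by (simp add: power_mono)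
    then show "(\<kappa> h)^2 / (4 * t) \<le> Cs^2 / (4 * t)" using t0 by (simp add: divide_right_mono)
  qed
  have s4: "(\<Sum>h\<in>G. Cs^2 / (4 * t)) = real (card G) * Cs^2 / (4 * t)" by simp
  have s5: "real (card G) * Cs^2 / (4 * t) \<le> cs * (\<Sum>h\<in>G. \<nu> h) / 2"
    using A1 t0 unfolding t_def by (simp add: divide_le_eq mult_ac)
  have "(\<Sum>h\<in>G. (\<kappa> h)^2 / (4 * t) + t * (\<delta> h)^2) = (\<Sum>h\<in>G. (\<kappa> h)^2 / (4 * t)) + t * (\<Sum>h\<in>G. (\<delta> h)^2)"
    by (simp add: sum.distrib sum_distrib_left)
  with s2 s3 s4 s5 have "(\<Sum>h\<in>G. \<kappa> h * \<delta> h) \<le> cs * (\<Sum>h\<in>G. \<nu> h) / 2 + t * (\<Sum>h\<in>G. (\<delta> h)^2)"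
    by linarith
  with s1 A2 show ?thesis unfolding t_def by (simp add: algebra_simps)
qed




definition Xm :: "real^('a \<times> 'b) \<Rightarrow> real^'a \<Rightarrow> real^'b" where
  "Xm x u = (\<chi> j. \<Sum>i\<in>UNIV. u$i * x$(i,j))"

lemma inner_real_vec: "(u::real^'n) \<bullet> v = (\<Sum>i\<in>UNIV. u$i * v$i)"
  by (simp add: inner_vec_def)

lemma dual_inner: "(\<forall>c\<in>C. 0 \<le> u \<bullet> c) \<Longrightarrow> (\<lambda>a. u \<bullet> a) \<in> dual_cone C"
  unfolding dual_cone_def by (simp add: linear_iff inner_add_right)

lemma tf_inner:
  "tensor_functional (\<lambda>a. u \<bullet> a) (\<lambda>b. v \<bullet> b) z = (\<Sum>i\<in>UNIV. \<Sum>j\<in>UNIV. u$i * v$j * z$(i,j))"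
  unfolding tensor_functional_def by (simp add: inner_axis)

lemma v_Xm: "v \<bullet> Xm x u = (\<Sum>i\<in>UNIV. \<Sum>j\<in>UNIV. u$i * v$j * x$(i,j))"
proof -
  have "v \<bullet> Xm x u = (\<Sum>j\<in>UNIV. \<Sum>i\<in>UNIV. u$i * v$j * x$(i,j))"
    unfolding inner_real_vec Xm_def by (simp add: sum_distrib_left mult_ac)
  also have "\<dots> = (\<Sum>i\<in>UNIV. \<Sum>j\<in>UNIV. u$i * v$j * x$(i,j))" by (rule sum.swap)
  finally show ?thesis .
qed

lemma norm_tensor:
  fixes u :: "real^'a" and v :: "real^'b"
  shows "norm ((\<chi> p. u$(fst p) * v$(snd p)) :: real^('a\<times>'b)) = norm u * norm v"
proof -
  let ?T = "(\<chi> p. u$(fst p) * v$(snd p)) :: real^('a\<times>'b)"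
  have "(norm ?T)^2 = (\<Sum>p\<in>UNIV. (u$(fst p) * v$(snd p))^2)"
    unfolding power2_norm_eq_inner inner_real_vec by (simp add: power2_eq_square)
  also have "\<dots> = (\<Sum>p\<in>UNIV \<times> UNIV. (u$(fst p) * v$(snd p))^2)" by (simp add: UNIV_Times_UNIV)
  also have "\<dots> = (\<Sum>i\<in>UNIV. \<Sum>j\<in>UNIV. (u$i)^2 * (v$j)^2)"
    by (simp add: sum.cartesian_product power_mult_distrib case_prod_unfold)
  also have "\<dots> = (\<Sum>i\<in>UNIV. (u$i)^2) * (\<Sum>j\<in>UNIV. (v$j)^2)"
    by (rule sum_product[symmetric])
  also have "\<dots> = (norm u)^2 * (norm v)^2"
    unfolding power2_norm_eq_inner inner_real_vec by (simp add: power2_eq_square)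
  finally have "(norm ?T)^2 = (norm u * norm v)^2" by (simp add: power_mult_distrib)
  then show ?thesis by (simp add: power2_eq_iff_nonneg)
qed

lemma margin:
  fixes CA :: "(real^'a) set" and CB :: "(real^'b) set" and x :: "real^('a \<times> 'b)"
  assumes cb: "cball x \<zeta> \<subseteq> max_tensor CA CB" and z0: "\<zeta> > 0"
    and DA: "\<forall>a\<in>CA. 0 \<le> u \<bullet> a" and DB: "\<forall>b\<in>CB. 0 \<le> v \<bullet> b"
  shows "\<zeta> * norm u * norm v \<le> v \<bullet> Xm x u"
proof -
  let ?T = "(\<chi> p. u$(fst p) * v$(snd p)) :: real^('a\<times>'b)"
  show ?thesis
  proof (cases "u = 0 \<or> v = 0")
    case True
    then show ?thesis by (auto simp: v_Xm)
  next
    case False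
    then have nz: "norm u * norm v > 0" by simp
    define s where "s = \<zeta> / (norm u * norm v)"
    have s0: "s > 0" unfolding s_def using nz z0 by simp
    define z where "z = x - s *\<^sub>R ?T"
    have "dist x z = \<zeta>" unfolding z_def s_def dist_norm using nz z0 False by (simp add: norm_tensor)
    then have "z \<in> max_tensor CA CB" using cb by auto
    then have "0 \<le> tensor_functional (\<lambda>a. u \<bullet> a) (\<lambda>b. v \<bullet> b) z"
      unfolding max_tensor_def using dual_inner[OF DA] dual_inner[OF DB] by blast
    also have "tensor_functional (\<lambda>a. u \<bullet> a) (\<lambda>b. v \<bullet> b) z
        = v \<bullet> Xm x u - s * (\<Sum>i\<in>UNIV. \<Sum>j\<in>UNIV. (u$i)^2 * (v$j)^2)"
      unfolding tf_inner v_Xm z_def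
      by (simp add: algebra_simps sum_subtractf sum_distrib_left power2_eq_square)
    also have "(\<Sum>i\<in>UNIV. \<Sum>j\<in>UNIV. (u$i)^2 * (v$j)^2) = (norm u * norm v)^2"
    proof -
      have "(\<Sum>i\<in>UNIV. \<Sum>j\<in>UNIV. (u$i)^2 * (v$j)^2) = (\<Sum>i\<in>UNIV. (u$i)^2) * (\<Sum>j\<in>UNIV. (v$j)^2)"
        by (rule sum_product[symmetric])
      also have "\<dots> = (norm u)^2 * (norm v)^2"
        unfolding power2_norm_eq_inner inner_real_vec by (simp add: power2_eq_square)
      finally show ?thesis by (simp add: power_mult_distrib)
    qed
    finally have "s * (norm u * norm v)^2 \<le> v \<bullet> Xm x u" by simp
    moreover have "s * (norm u * norm v)^2 = \<zeta> * norm u * norm v"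
      unfolding s_def using nz by (simp add: power2_eq_square)
    ultimately show ?thesis by simp
  qed
qed




definition nuF :: "nat \<Rightarrow> (real^'b \<Rightarrow> real) \<Rightarrow> (nat \<Rightarrow> real^'b) \<Rightarrow> real^'b \<Rightarrow> real" where
  "nuF k \<mu> t g = (\<Sum>q<k. if t q = g then 1 / \<mu> g else 0)"

definition nuP :: "nat \<Rightarrow> (real^'b \<Rightarrow> real) \<Rightarrow> (nat \<Rightarrow> real^'b) \<Rightarrow> nat \<Rightarrow> real^'b \<Rightarrow> real" where
  "nuP k \<mu> t p g = (\<Sum>q\<in>{..<k}-{p}. if t q = g then 1 / \<mu> g else 0)"

lemma nuP_eq:
  assumes "p < k"
  shows "nuP k \<mu> t p = (\<lambda>g. nuF k \<mu> t g - (1 / \<mu> (t p)) * (if t p = g then 1 else 0))"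
proof
  fix g
  have "nuP k \<mu> t p g = nuF k \<mu> t g - (if t p = g then 1 / \<mu> g else 0)"
    unfolding nuP_def nuF_def using assms by (simp add: sum_diff1)
  then show "nuP k \<mu> t p g = nuF k \<mu> t g - (1 / \<mu> (t p)) * (if t p = g then 1 else 0)"
    by auto
qed

lemma nuF_group:
  assumes "finite G" "\<forall>q<k. t q \<in> G"
  shows "(\<Sum>p<k. f (t p) / \<mu> (t p)) = (\<Sum>g\<in>G. nuF k \<mu> t g * f g)"
proof -
  have "(\<Sum>g\<in>G. nuF k \<mu> t g * f g) = (\<Sum>g\<in>G. \<Sum>q<k. if t q = g then f g / \<mu> g else 0)"
    unfolding nuF_def sum_distrib_right by (intro sum.cong refl) auto
  also have "\<dots> = (\<Sum>q<k. \<Sum>g\<in>G. if t q = g then f g / \<mu> g else 0)" by (rule sum.swap)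
  also have "\<dots> = (\<Sum>q<k. f (t q) / \<mu> (t q))"
    by (intro sum.cong refl) (use assms in \<open>simp add: sum.delta'\<close>)
  finally show ?thesis by simp
qed

lemma nuF_nonneg: "(\<forall>g. 0 < \<mu> g) \<Longrightarrow> 0 \<le> nuF k \<mu> t g"
  unfolding nuF_def by (intro sum_nonneg) (auto simp: less_imp_le)

lemma nuF_sum_lower:
  assumes "finite G" "\<forall>q<k. t q \<in> G" "\<forall>g\<in>G. 0 < \<mu> g \<and> \<mu> g \<le> M"
  shows "real k / M \<le> (\<Sum>g\<in>G. nuF k \<mu> t g)"
proof -
  have "(\<Sum>g\<in>G. nuF k \<mu> t g) = (\<Sum>p<k. 1 / \<mu> (t p))"
    using nuF_group[OF assms(1,2), of "\<lambda>_. 1" \<mu>] by simp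
  also have "\<dots> \<ge> (\<Sum>p<k. 1 / M)"
  proof (rule sum_mono)
    fix p assume "p \<in> {..<k}"
    then have "t p \<in> G" using assms(2) by simp
    then show "1 / M \<le> 1 / \<mu> (t p)" using assms(3) by (simp add: frac_le)
  qed
  finally show ?thesis by simp
qed

lemma E_nonneg:
  fixes G :: "(real^'b) set" and u a0 :: "real^'a" and c0 :: "real^'b \<Rightarrow> real^'a"
    and Rf :: "real^'b \<Rightarrow> real^'b \<Rightarrow> real" and k :: nat
  assumes fin: "finite G" and Rlin: "\<And>a g. Rf (\<Sum>h\<in>G. a h *\<^sub>R h) g = (\<Sum>h\<in>G. a h * Rf h g)"
    and tG: "\<forall>q<k. t q \<in> G"
    and mu: "\<forall>g\<in>G. \<tau> \<le> \<mu> g \<and> \<mu> g \<le> M" and tau: "\<tau> > 0"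
    and hc: "\<forall>g\<in>G. u \<bullet> c0 g = Rf (\<Sum>h\<in>G. \<kappa> h *\<^sub>R h) g"
    and kl: "\<And>h. h\<in>G \<Longrightarrow> cs \<le> \<kappa> h" and ku: "\<And>h. h\<in>G \<Longrightarrow> \<kappa> h \<le> Cs" and cs0: "cs \<ge> 0"
    and th: "\<theta> > 0" and U: "u \<bullet> a0 > 0"
    and A1: "real (card G) * Cs^2 \<le> 2 * \<theta> * (u \<bullet> a0) * cs * (real k / M)"
    and A2: "2 * \<theta> * (u \<bullet> a0) * (real k * E1 / \<tau>^2) \<le> cs * (real k / M)"
    and E1: "E1 = (\<Sum>h\<in>G. \<bar>rho G Rf (\<lambda>g. if h = g then 1 else 0) h\<bar>)"
  shows "0 \<le> u \<bullet> (\<Sum>p<k. (1 / \<mu> (t p)) *\<^sub>R (c0 (t p) + (\<theta> * rho G Rf (nuP k \<mu> t p) (t p)) *\<^sub>R a0))"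
proof -
  define \<nu> where "\<nu> = nuF k \<mu> t"
  define ev where "ev h = (\<lambda>g::real^'b. if h = g then 1 else (0::real))" for h
  define U where "U = u \<bullet> a0"
  have mupos: "\<forall>g\<in>G. 0 < \<mu> g" using mu tau by force
  have r1: "rho G Rf (nuP k \<mu> t p) (t p) = rho G Rf \<nu> (t p) - (1 / \<mu> (t p)) * rho G Rf (ev (t p)) (t p)"
    if "p < k" for p
    unfolding nuP_eq[OF that] \<nu>_def ev_def by (rule rho_lin[OF fin Rlin])
  define err where "err = (\<Sum>p<k. (1 / \<mu> (t p)) * ((1 / \<mu> (t p)) * rho G Rf (ev (t p)) (t p)))"
  have "u \<bullet> (\<Sum>p<k. (1 / \<mu> (t p)) *\<^sub>R (c0 (t p) + (\<theta> * rho G Rf (nuP k \<mu> t p) (t p)) *\<^sub>R a0))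
      = (\<Sum>p<k. (1 / \<mu> (t p)) * (u \<bullet> c0 (t p) + \<theta> * rho G Rf (nuP k \<mu> t p) (t p) * U))"
    unfolding U_def by (simp add: inner_sum_right inner_add_right)
  also have "\<dots> = (\<Sum>p<k. (1 / \<mu> (t p)) * (u \<bullet> c0 (t p) + \<theta> * (rho G Rf \<nu> (t p) - (1 / \<mu> (t p)) * rho G Rf (ev (t p)) (t p)) * U))"
    by (intro sum.cong refl) (simp add: r1)
  also have "\<dots> = (\<Sum>p<k. (u \<bullet> c0 (t p)) / \<mu> (t p)) + \<theta> * U * ((\<Sum>p<k. rho G Rf \<nu> (t p) / \<mu> (t p)) - err)"
  proof -
    have "(\<Sum>p<k. (1 / \<mu> (t p)) * (u \<bullet> c0 (t p) + \<theta> * (rho G Rf \<nu> (t p) - (1 / \<mu> (t p)) * rho G Rf (ev (t p)) (t p)) * U))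
       = (\<Sum>p<k. (u \<bullet> c0 (t p)) / \<mu> (t p) + (\<theta> * U) * (rho G Rf \<nu> (t p) / \<mu> (t p))
            - (\<theta> * U) * ((1 / \<mu> (t p)) * ((1 / \<mu> (t p)) * rho G Rf (ev (t p)) (t p))))"
      by (intro sum.cong refl) (simp add: algebra_simps)
    also have "\<dots> = (\<Sum>p<k. (u \<bullet> c0 (t p)) / \<mu> (t p)) + (\<theta> * U) * (\<Sum>p<k. rho G Rf \<nu> (t p) / \<mu> (t p))
            - (\<theta> * U) * err"
      unfolding err_def by (simp only: sum.distrib sum_subtractf sum_distrib_left)
    finally show ?thesis by (simp only: right_diff_distrib add_diff_eq)
  qed
  also have "(\<Sum>p<k. (u \<bullet> c0 (t p)) / \<mu> (t p)) = (\<Sum>g\<in>G. \<nu> g * (u \<bullet> c0 g))"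
    unfolding \<nu>_def by (rule nuF_group[OF fin tG])
  also have "\<dots> = (\<Sum>g\<in>G. \<nu> g * Rf (\<Sum>h\<in>G. \<kappa> h *\<^sub>R h) g)"
    by (intro sum.cong refl) (simp add: hc)
  also have "\<dots> = (\<Sum>h\<in>G. \<kappa> h * (\<nu> h - dlt G Rf \<nu> h))" by (rule rho_pair[OF fin Rlin])
  also have "(\<Sum>p<k. rho G Rf \<nu> (t p) / \<mu> (t p)) = (\<Sum>g\<in>G. \<nu> g * rho G Rf \<nu> g)"
    unfolding \<nu>_def by (rule nuF_group[OF fin tG])
  also have "\<dots> = (\<Sum>h\<in>G. (dlt G Rf \<nu> h)^2)" by (rule rho_F2[OF fin Rlin])
  finally have eq: "u \<bullet> (\<Sum>p<k. (1 / \<mu> (t p)) *\<^sub>R (c0 (t p) + (\<theta> * rho G Rf (nuP k \<mu> t p) (t p)) *\<^sub>R a0))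
     = (\<Sum>h\<in>G. \<kappa> h * \<nu> h) - (\<Sum>h\<in>G. \<kappa> h * dlt G Rf \<nu> h) + \<theta> * U * ((\<Sum>h\<in>G. (dlt G Rf \<nu> h)^2) - err)"
    by (simp add: right_diff_distrib sum_subtractf)
  have errb: "err \<le> real k * E1 / \<tau>^2"
  proof -
    have "err \<le> (\<Sum>p<k. E1 / \<tau>^2)"
      unfolding err_def
    proof (rule sum_mono)
      fix p assume "p \<in> {..<k}"
      then have tp: "t p \<in> G" using tG by simp
      have m1: "\<tau> \<le> \<mu> (t p)" using mu tp by simp
      have "\<bar>rho G Rf (ev (t p)) (t p)\<bar> \<le> E1"
        unfolding E1 ev_def by (rule member_le_sum[OF tp _ fin, of "\<lambda>h. \<bar>rho G Rf (\<lambda>g. if h = g then 1 else 0) h\<bar>"]) simp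
      moreover have "(1 / \<mu> (t p)) * (1 / \<mu> (t p)) \<le> 1 / \<tau>^2"
      proof -
        have "1 / \<mu> (t p) \<le> 1 / \<tau>" using m1 tau by (simp add: frac_le)
        moreover have "0 \<le> 1 / \<mu> (t p)" using m1 tau by simp
        ultimately have "(1 / \<mu> (t p)) * (1 / \<mu> (t p)) \<le> (1 / \<tau>) * (1 / \<tau>)"
          using tau by (intro mult_mono) auto
        then show ?thesis by (simp add: power2_eq_square)
      qed
      moreover have "0 \<le> (1 / \<mu> (t p)) * (1 / \<mu> (t p))" by simp
      ultimately have "(1 / \<mu> (t p)) * (1 / \<mu> (t p)) * rho G Rf (ev (t p)) (t p) \<le> (1 / \<tau>^2) * E1"
      proof -
        let ?w = "(1 / \<mu> (t p)) * (1 / \<mu> (t p))" and ?q = "rho G Rf (ev (t p)) (t p)"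
        have "?w * ?q \<le> ?w * \<bar>?q\<bar>" by (rule mult_left_mono) (auto simp: mult_nonneg_nonneg)
        also have "\<dots> \<le> (1 / \<tau>^2) * \<bar>?q\<bar>" by (rule mult_right_mono) (use \<open>?w \<le> 1 / \<tau>^2\<close> in auto)
        also have "\<dots> \<le> (1 / \<tau>^2) * E1" by (rule mult_left_mono) (use \<open>\<bar>?q\<bar> \<le> E1\<close> in auto)
        finally show ?thesis .
      qed
      then show "(1 / \<mu> (t p)) * ((1 / \<mu> (t p)) * rho G Rf (ev (t p)) (t p)) \<le> E1 / \<tau>^2"
        by (simp add: mult.assoc)
    qed
    then show ?thesis by simp
  qed
  have nusum: "real k / M \<le> (\<Sum>h\<in>G. \<nu> h)"
    unfolding \<nu>_def by (rule nuF_sum_lower[OF fin tG]) (use mu tau in force)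
  have U0: "U > 0" unfolding U_def by (rule U)
  have A1': "real (card G) * Cs^2 \<le> 2 * \<theta> * U * cs * (\<Sum>h\<in>G. \<nu> h)"
  proof -
    have "2 * \<theta> * U * cs * (real k / M) \<le> 2 * \<theta> * U * cs * (\<Sum>h\<in>G. \<nu> h)"
      using nusum th U0 cs0 by (intro mult_left_mono) auto
    then show ?thesis using A1 unfolding U_def by linarith
  qed
  have A2': "2 * \<theta> * U * err \<le> cs * (\<Sum>h\<in>G. \<nu> h)"
  proof -
    have "2 * \<theta> * U * err \<le> 2 * \<theta> * U * (real k * E1 / \<tau>^2)"
      using errb th U0 by (intro mult_left_mono) auto
    also have "\<dots> \<le> cs * (real k / M)" using A2 unfolding U_def .
    also have "\<dots> \<le> cs * (\<Sum>h\<in>G. \<nu> h)" using nusum cs0 by (rule mult_left_mono)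
    finally show ?thesis .
  qed
  have nu0: "0 \<le> \<nu> h" if "h \<in> G" for h
    unfolding \<nu>_def nuF_def using mupos that by (intro sum_nonneg) (auto simp: less_imp_le)
  show ?thesis unfolding eq
    by (rule key_ineq[OF fin th U0 kl ku cs0 nu0 A1' A2'])
qed




definition Dt :: "nat \<Rightarrow> (real^'b \<Rightarrow> real) \<Rightarrow> ((real^'b \<Rightarrow> real) \<Rightarrow> real^'b \<Rightarrow> real^'a) \<Rightarrow> (nat \<Rightarrow> real^'b) \<Rightarrow> real^'a" where
  "Dt k \<mu> c t = (1 / real k) *\<^sub>R (\<Sum>p<k. (\<Prod>q\<in>{..<k}-{p}. \<mu> (t q)) *\<^sub>R c (nuP k \<mu> t p) (t p))"

lemma sym_expand:
  fixes x :: "real^('a::finite \<times> 'b::finite)" and y :: "real^'b" and G :: "(real^'b) set"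
    and c :: "(real^'b \<Rightarrow> real) \<Rightarrow> real^'b \<Rightarrow> real^'a"
  assumes fin: "finite G" and k1: "k \<ge> 1" and yrep: "y = (\<Sum>g\<in>G. \<mu> g *\<^sub>R g)"
    and xrep: "\<And>\<nu> i j. x$(i,j) = (\<Sum>g\<in>G. (c \<nu> g)$i * g$j)"
  shows "id_tensor_sym_proj k (x_tensor_ypow x y k)
    = (\<lambda>i js. \<Sum>t\<in>PiE {..<k} (\<lambda>_. G). elem_tensor (Dt k \<mu> c t) (map t [0..<k]) i js)"
proof (intro ext)
  fix i js
  show "id_tensor_sym_proj k (x_tensor_ypow x y k) i js
    = (\<Sum>t\<in>PiE {..<k} (\<lambda>_. G). elem_tensor (Dt k \<mu> c t) (map t [0..<k]) i js)"
  proof (cases "length js = k")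
    case False
    then show ?thesis by (simp add: sym_formula0 elem_tensor_def)
  next
    case len: True
    let ?T = "PiE {..<k} (\<lambda>_. G)"
    let ?F = "\<lambda>q g. (g::real^'b)$(js!q)"
    have ycomp: "y$(js!q) = (\<Sum>g\<in>G. \<mu> g * ?F q g)" for q
      unfolding yrep by (simp add: sum_component)
    have trm: "x$(i, js!p) * (\<Prod>q\<in>{..<k}-{p}. y$(js!q))
        = (\<Sum>t\<in>?T. (\<Prod>q\<in>{..<k}-{p}. \<mu> (t q)) * (c (nuP k \<mu> t p) (t p))$i * (\<Prod>q\<in>{..<k}. ?F q (t q)))"
      if p: "p < k" for p
    proof -
      have "x$(i, js!p) * (\<Prod>q\<in>{..<k}-{p}. y$(js!q)) = x$(i, js!p) * (\<Prod>q\<in>{..<k}-{p}. \<Sum>g\<in>G. \<mu> g * ?F q g)"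
        by (simp add: ycomp)
      also have "\<dots> = (\<Sum>t\<in>?T. (\<Prod>q\<in>{..<k}-{p}. \<mu> (t q)) * (c (nuP k \<mu> t p) (t p))$i * (\<Prod>q\<in>{..<k}. ?F q (t q)))"
      proof (rule expand_pos[where C = "\<lambda>t g. (c (nuP k \<mu> t p) g)$i"])
        show "finite G" by (rule fin)
        show "finite {..<k}" by simp
        show "p \<in> {..<k}" using p by simp
        show "(\<Sum>g\<in>G. (c (nuP k \<mu> t p) g)$i * ?F p g) = x$(i, js!p)" for t
          by (rule xrep[symmetric])
        show "(\<lambda>g. (c (nuP k \<mu> t p) g)$i) = (\<lambda>g. (c (nuP k \<mu> t' p) g)$i)"
          if "\<forall>q\<in>{..<k}-{p}. t q = t' q" for t t'
        proof -
          have "nuP k \<mu> t p = nuP k \<mu> t' p" unfolding nuP_def using that by (intro ext sum.cong) auto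
          then show ?thesis by simp
        qed
      qed
      finally show ?thesis .
    qed
    have "id_tensor_sym_proj k (x_tensor_ypow x y k) i js
        = (1 / real k) * (\<Sum>p<k. x$(i, js!p) * (\<Prod>q\<in>{..<k}-{p}. y$(js!q)))"
      by (rule sym_formula[OF len k1])
    also have "\<dots> = (1 / real k) * (\<Sum>p<k. \<Sum>t\<in>?T. (\<Prod>q\<in>{..<k}-{p}. \<mu> (t q)) * (c (nuP k \<mu> t p) (t p))$i * (\<Prod>q\<in>{..<k}. ?F q (t q)))"
      by (simp add: trm)
    also have "\<dots> = (\<Sum>t\<in>?T. (1 / real k) * (\<Sum>p<k. (\<Prod>q\<in>{..<k}-{p}. \<mu> (t q)) * (c (nuP k \<mu> t p) (t p))$i) * (\<Prod>q\<in>{..<k}. ?F q (t q)))"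
    proof -
      have "(\<Sum>p<k. \<Sum>t\<in>?T. (\<Prod>q\<in>{..<k}-{p}. \<mu> (t q)) * (c (nuP k \<mu> t p) (t p))$i * (\<Prod>q\<in>{..<k}. ?F q (t q)))
          = (\<Sum>t\<in>?T. \<Sum>p<k. (\<Prod>q\<in>{..<k}-{p}. \<mu> (t q)) * (c (nuP k \<mu> t p) (t p))$i * (\<Prod>q\<in>{..<k}. ?F q (t q)))"
        by (rule sum.swap)
      also have "\<dots> = (\<Sum>t\<in>?T. (\<Sum>p<k. (\<Prod>q\<in>{..<k}-{p}. \<mu> (t q)) * (c (nuP k \<mu> t p) (t p))$i) * (\<Prod>q\<in>{..<k}. ?F q (t q)))"
        by (simp only: sum_distrib_right)
      finally have EQ: "(\<Sum>p<k. \<Sum>t\<in>?T. (\<Prod>q\<in>{..<k}-{p}. \<mu> (t q)) * (c (nuP k \<mu> t p) (t p))$i * (\<Prod>q\<in>{..<k}. ?F q (t q)))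
          = (\<Sum>t\<in>?T. (\<Sum>p<k. (\<Prod>q\<in>{..<k}-{p}. \<mu> (t q)) * (c (nuP k \<mu> t p) (t p))$i) * (\<Prod>q\<in>{..<k}. ?F q (t q)))" .
      show ?thesis by (subst EQ) (simp only: sum_distrib_left[of "1 / real k" _ ?T] mult.assoc)
    qed
    also have "\<dots> = (\<Sum>t\<in>?T. elem_tensor (Dt k \<mu> c t) (map t [0..<k]) i js)"
    proof (intro sum.cong refl)
      fix t
      have "(\<Prod>m<length (map t [0..<k]). (map t [0..<k] ! m) $ (js ! m)) = (\<Prod>q\<in>{..<k}. ?F q (t q))"
        by (simp only: length_map length_upt diff_zero lessThan_atLeast0) (rule prod.cong; simp)
      moreover have "(Dt k \<mu> c t)$i = (1 / real k) * (\<Sum>p<k. (\<Prod>q\<in>{..<k}-{p}. \<mu> (t q)) * (c (nuP k \<mu> t p) (t p))$i)"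
        unfolding Dt_def by (simp add: sum_component)
      ultimately show "(1 / real k) * (\<Sum>p<k. (\<Prod>q\<in>{..<k}-{p}. \<mu> (t q)) * (c (nuP k \<mu> t p) (t p))$i) * (\<Prod>q\<in>{..<k}. ?F q (t q))
          = elem_tensor (Dt k \<mu> c t) (map t [0..<k]) i js"
        unfolding elem_tensor_def using len by simp
    qed
    finally show ?thesis .
  qed
qed




lemma ball_in_C:
  fixes C :: "(real^'n) set"
  assumes C: "convex C" "closed C" "cone C" "C \<noteq> {}"
    and mg: "\<And>v. \<forall>b\<in>C. 0 \<le> v \<bullet> b \<Longrightarrow> e * norm v \<le> v \<bullet> w"
  shows "cball w e \<subseteq> C"
proof
  fix p assume "p \<in> cball w e"
  then have d: "norm (w - p) \<le> e" by (simp add: dist_norm)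
  show "p \<in> C"
  proof (rule bipolar[OF C])
    fix v assume v: "\<forall>c\<in>C. 0 \<le> v \<bullet> c"
    have "v \<bullet> (w - p) \<le> norm v * norm (w - p)" by (rule norm_cauchy_schwarz)
    also have "\<dots> \<le> norm v * e" using d by (simp add: mult_left_mono)
    finally have "v \<bullet> w - v \<bullet> p \<le> e * norm v" by (simp add: inner_diff_right mult.commute)
    then show "0 \<le> v \<bullet> p" using mg[OF v] by linarith
  qed
qed

lemma dual_nonzero:
  fixes C :: "(real^'n) set"
  assumes C: "convex C" "closed C" "cone C" "C \<noteq> {}" and pt: "\<forall>v. v \<in> C \<and> - v \<in> C \<longrightarrow> v = 0"
  shows "\<exists>v0. (\<forall>b\<in>C. 0 \<le> v0 \<bullet> b) \<and> v0 \<noteq> 0"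
proof -
  obtain l :: 'n where True by simp
  define e :: "real^'n" where "e = axis l 1"
  have "e \<noteq> 0" unfolding e_def by (simp add: axis_eq_0_iff)
  then obtain p where p: "p \<notin> C" using pt by auto
  have "\<not> (\<forall>v. (\<forall>c\<in>C. 0 \<le> v \<bullet> c) \<longrightarrow> 0 \<le> v \<bullet> p)"
    using bipolar[OF C, of p] p by blast
  then obtain v where v: "\<forall>c\<in>C. 0 \<le> v \<bullet> c" "v \<bullet> p < 0" by auto
  then have "v \<noteq> 0" by auto
  with v show ?thesis by blast
qed

lemma Xm_bound:
  "norm (Xm x u) \<le> (\<Sum>j\<in>UNIV. \<Sum>i\<in>UNIV. \<bar>x$(i,j)\<bar>) * norm u"
proof -
  have "norm (Xm x u) \<le> (\<Sum>j\<in>UNIV. \<bar>(Xm x u)$j\<bar>)" by (rule norm_le_l1_cart)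
  also have "\<dots> \<le> (\<Sum>j\<in>UNIV. \<Sum>i\<in>UNIV. \<bar>x$(i,j)\<bar> * norm u)"
  proof (rule sum_mono)
    fix j
    have "\<bar>(Xm x u)$j\<bar> = \<bar>\<Sum>i\<in>UNIV. u$i * x$(i,j)\<bar>" unfolding Xm_def by simp
    also have "\<dots> \<le> (\<Sum>i\<in>UNIV. \<bar>u$i * x$(i,j)\<bar>)" by (rule sum_abs)
    also have "\<dots> \<le> (\<Sum>i\<in>UNIV. \<bar>x$(i,j)\<bar> * norm u)"
    proof (rule sum_mono)
      fix i
      have "\<bar>u$i\<bar> \<le> norm u" by (rule component_le_norm_cart)
      then show "\<bar>u$i * x$(i,j)\<bar> \<le> \<bar>x$(i,j)\<bar> * norm u"
        by (simp add: abs_mult mult.commute[of "\<bar>x$(i,j)\<bar>"] mult_right_mono)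
    qed
    finally show "\<bar>(Xm x u)$j\<bar> \<le> (\<Sum>i\<in>UNIV. \<bar>x$(i,j)\<bar> * norm u)" .
  qed
  also have "\<dots> = (\<Sum>j\<in>UNIV. \<Sum>i\<in>UNIV. \<bar>x$(i,j)\<bar>) * norm u" by (simp add: sum_distrib_right)
  finally show ?thesis .
qed

lemma A_bounds:
  fixes s r cc M Ck nG a E1 tau U A \<theta> :: real and k :: nat
  assumes s: "s > 0" and r: "r > 0" and cc: "cc > 0" and M: "M > 0" and nG: "nG \<ge> 0"
    and a: "a \<ge> 0" and E1: "E1 \<ge> 0" and tau: "tau > 0" and U: "r * s \<le> U" "U \<le> a * s"
    and Adef: "A = nG * Ck^2 * M / (r * cc)"
    and kbig: "2 * A * a * E1 * M / (tau^2 * cc) \<le> real k" and k0: "k > 0"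
    and th: "\<theta> = A / real k"
  shows "nG * (Ck * s)^2 \<le> 2 * \<theta> * U * (cc * s) * (real k / M)"
    and "2 * \<theta> * U * (real k * E1 / tau^2) \<le> (cc * s) * (real k / M)"
proof -
  have A0: "A \<ge> 0" unfolding Adef using nG M r cc by simp
  have kp: "real k > 0" using k0 by simp
  have "2 * \<theta> * U * (cc * s) * (real k / M) = 2 * A * U * cc * s / M"
    unfolding th using kp M by (simp add: field_simps)
  also have "\<dots> \<ge> 2 * A * (r * s) * cc * s / M"
    using U A0 cc s M by (intro divide_right_mono mult_right_mono mult_left_mono) auto
  also have "2 * A * (r * s) * cc * s / M = 2 * nG * Ck^2 * s^2"
    unfolding Adef using r cc M by (simp add: field_simps power2_eq_square)
  finally have h1: "2 * nG * Ck^2 * s^2 \<le> 2 * \<theta> * U * (cc * s) * (real k / M)" .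
  have "0 \<le> nG * Ck^2 * s^2" using nG by simp
  then show "nG * (Ck * s)^2 \<le> 2 * \<theta> * U * (cc * s) * (real k / M)"
    using h1 by (simp add: power_mult_distrib)
  have "2 * \<theta> * U * (real k * E1 / tau^2) = 2 * A * U * E1 / tau^2"
    unfolding th using kp by (simp add: field_simps)
  also have "\<dots> \<le> 2 * A * (a * s) * E1 / tau^2"
    using U A0 E1 by (intro divide_right_mono mult_right_mono mult_left_mono) auto
  also have "\<dots> = (cc * s / M) * (2 * A * a * E1 * M / (tau^2 * cc))"
    using cc M tau by (simp add: field_simps)
  also have "\<dots> \<le> (cc * s / M) * real k"
    using kbig cc s M by (intro mult_left_mono) auto
  finally show "2 * \<theta> * U * (real k * E1 / tau^2) \<le> (cc * s) * (real k / M)" by simp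
qed

lemma Dt_in_C:
  fixes CA :: "(real^'a) set"
  assumes C: "convex CA" "closed CA" "cone CA" "CA \<noteq> {}"
    and tG: "\<forall>q<k. t q \<in> G" and mu: "\<forall>g\<in>G. \<mu> g > 0" and k1: "k \<ge> 1"
    and pos: "\<And>u. \<forall>a\<in>CA. 0 \<le> u \<bullet> a \<Longrightarrow> 0 \<le> u \<bullet> (\<Sum>p<k. (1 / \<mu> (t p)) *\<^sub>R c (nuP k \<mu> t p) (t p))"
  shows "Dt k \<mu> c t \<in> CA"
proof -
  define E where "E = (\<Sum>p<k. (1 / \<mu> (t p)) *\<^sub>R c (nuP k \<mu> t p) (t p))"
  have EC: "E \<in> CA" unfolding E_def by (rule bipolar[OF C]) (rule pos)
  define P where "P = (\<Prod>q<k. \<mu> (t q))"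
  have mp: "\<mu> (t q) > 0" if "q < k" for q using tG mu that by auto
  have P0: "P > 0" unfolding P_def using mp by (intro prod_pos) auto
  have pr: "(\<Prod>q\<in>{..<k}-{p}. \<mu> (t q)) = P / \<mu> (t p)" if "p < k" for p
    unfolding P_def using prod_diff1[of "{..<k}" "\<lambda>q. \<mu> (t q)" p] mp[OF that] that by simp
  have "Dt k \<mu> c t = (1 / real k) *\<^sub>R (\<Sum>p<k. (P / \<mu> (t p)) *\<^sub>R c (nuP k \<mu> t p) (t p))"
    unfolding Dt_def by (simp add: pr)
  also have "\<dots> = (P / real k) *\<^sub>R E"
    unfolding E_def by (simp add: scaleR_sum_right divide_inverse mult_ac)
  finally have "Dt k \<mu> c t = (P / real k) *\<^sub>R E" .
  moreover have "P / real k \<ge> 0" using P0 by simp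
  ultimately show ?thesis using EC C(3) unfolding cone_def by simp
qed




theorem theorem4:
  fixes CA :: "(real^'a) set" and CB :: "(real^'b) set"
    and x :: "real^('a \<times> 'b)" and y :: "real^'b"
  assumes "proper_cone CA" and "proper_cone CB"
    and "x \<in> interior (max_tensor CA CB)"
    and "y \<in> interior CB"
  shows "\<exists>k::nat. k \<ge> 1 \<and>
    id_tensor_sym_proj k (x_tensor_ypow x y k) \<in> min_tensor_pow CA CB k"
proof -
  have CA: "convex CA" "closed CA" "cone CA" "CA \<noteq> {}" using assms(1) unfolding proper_cone_def by auto
  have CB: "convex CB" "closed CB" "cone CB" "CB \<noteq> {}" using assms(2) unfolding proper_cone_def by auto
  have ptB: "\<forall>v. v \<in> CB \<and> - v \<in> CB \<longrightarrow> v = 0" using assms(2) unfolding proper_cone_def by auto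
  obtain \<zeta> where z0: "\<zeta> > 0" and zb: "cball x \<zeta> \<subseteq> max_tensor CA CB"
    using assms(3) unfolding mem_interior_cball by blast
  obtain \<zeta>y where zy0: "\<zeta>y > 0" and zyb: "cball y \<zeta>y \<subseteq> CB"
    using assms(4) unfolding mem_interior_cball by blast
  have ballX: "cball (Xm x u) (\<zeta> * norm u) \<subseteq> CB" if DA: "\<forall>a\<in>CA. 0 \<le> u \<bullet> a" for u
  proof (rule ball_in_C[OF CB])
    fix v assume "\<forall>b\<in>CB. 0 \<le> v \<bullet> b"
    from margin[OF zb z0 DA this] show "\<zeta> * norm u * norm v \<le> v \<bullet> Xm x u" .
  qed
  obtain v0 where v0: "\<forall>b\<in>CB. 0 \<le> v0 \<bullet> b" "v0 \<noteq> 0" using dual_nonzero[OF CB ptB] by blast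
  define a0 :: "real^'a" where "a0 = (\<chi> i. \<Sum>j\<in>UNIV. x$(i,j) * v0$j)"
  have ua0: "u \<bullet> a0 = v0 \<bullet> Xm x u" for u
    unfolding v_Xm unfolding a0_def inner_real_vec by (simp add: sum_distrib_left mult_ac)
  define r where "r = \<zeta> * norm v0"
  have r0: "r > 0" using z0 v0(2) unfolding r_def by simp
  have Ulow: "r * norm u \<le> u \<bullet> a0" if "\<forall>a\<in>CA. 0 \<le> u \<bullet> a" for u
    using margin[OF zb z0 that v0(1)] unfolding ua0 r_def by (simp add: mult_ac)
  have Uup: "u \<bullet> a0 \<le> norm a0 * norm u" for u
    using norm_cauchy_schwarz[of u a0] by (simp add: mult.commute)
  define Lx where "Lx = (\<Sum>j\<in>UNIV. \<Sum>i\<in>UNIV. \<bar>x$(i,j)\<bar>)"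
  have Xb: "norm (Xm x u) \<le> Lx * norm u" for u unfolding Lx_def by (rule Xm_bound)
  have Lx0: "Lx \<ge> 0" unfolding Lx_def by (simp add: sum_nonneg)
  define \<rho> where "\<rho> = min \<zeta> \<zeta>y / 2"
  have rho0: "\<rho> > 0" unfolding \<rho>_def using z0 zy0 by simp
  have rz: "\<rho> \<le> \<zeta> / 2" "\<rho> \<le> \<zeta>y / 2" unfolding \<rho>_def by auto
  define \<Lambda> where "\<Lambda> = Lx + \<zeta> + norm y + \<zeta>y"
  have y\<rho>: "cball y \<rho> \<subseteq> CB"
    using zyb subset_cball[of \<rho> \<zeta>y y] rz zy0 by auto
  have y\<Lambda>: "norm y \<le> \<Lambda>" unfolding \<Lambda>_def using Lx0 z0 zy0 by simp
  from grid[OF rho0 y\<rho> y\<Lambda>] obtain G where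
    GG: "finite G \<and> G \<subseteq> CB
    \<and> (\<forall>w. cball w \<rho> \<subseteq> CB \<and> norm w \<le> \<Lambda> \<longrightarrow>
          (\<exists>\<alpha>. (\<forall>g\<in>G. 0 \<le> \<alpha> g \<and> \<alpha> g \<le> 1) \<and> w = (\<Sum>g\<in>G. \<alpha> g *\<^sub>R g)))
    \<and> (\<exists>\<eta>>0. \<exists>gp gm. \<forall>l. gp l \<in> G \<and> gm l \<in> G \<and> gp l - gm l = \<eta> *\<^sub>R axis l 1)"
    by blast
  have Gfin: "finite G" and GB: "G \<subseteq> CB" using GG by auto
  have Grep: "\<exists>\<alpha>. (\<forall>g\<in>G. 0 \<le> \<alpha> g \<and> \<alpha> g \<le> 1) \<and> w = (\<Sum>g\<in>G. \<alpha> g *\<^sub>R g)"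
    if "cball w \<rho> \<subseteq> CB" "norm w \<le> \<Lambda>" for w
    using GG that by blast
  obtain \<eta> gp gm where eta0: "\<eta> > 0" and gpm: "\<forall>l. gp l \<in> G \<and> gm l \<in> G \<and> gp l - gm l = \<eta> *\<^sub>R axis l 1"
    using GG by blast
  have Gne: "G \<noteq> {}" using gpm by auto
  define S where "S = (\<Sum>g\<in>G. g)"
  define \<tau>' where "\<tau>' = \<zeta>y / (2 * (norm S + 1))"
  have tp0: "\<tau>' > 0" unfolding \<tau>'_def
    by (rule divide_pos_pos[OF zy0]) (smt (verit) norm_ge_zero)
  have tS: "\<tau>' * norm S \<le> \<zeta>y / 2"
  proof -
    have q: "norm S / (norm S + 1) \<le> 1" by (smt (verit) norm_ge_zero divide_le_eq_1)
    have "\<tau>' * norm S = (\<zeta>y / 2) * (norm S / (norm S + 1))"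
      unfolding \<tau>'_def by (simp add: field_simps)
    also have "\<dots> \<le> (\<zeta>y / 2) * 1" using q zy0 by (intro mult_left_mono) auto
    finally show ?thesis by simp
  qed
  define wy where "wy = y - \<tau>' *\<^sub>R S"
  have wyb: "cball wy \<rho> \<subseteq> CB"
  proof
    fix p assume "p \<in> cball wy \<rho>"
    then have d1: "dist wy p \<le> \<rho>" by simp
    have "dist y p \<le> dist y wy + dist wy p" by (rule dist_triangle)
    also have "dist y wy = \<tau>' * norm S" unfolding wy_def dist_norm using tp0 by simp
    finally have "dist y p \<le> \<zeta>y" using d1 tS rz by linarith
    then show "p \<in> CB" using zyb by auto
  qed
  have wyn: "norm wy \<le> \<Lambda>"
  proof -
    have "norm wy \<le> norm y + norm (\<tau>' *\<^sub>R S)" unfolding wy_def by (rule norm_triangle_ineq4)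
    also have "norm (\<tau>' *\<^sub>R S) = \<tau>' * norm S" using tp0 by simp
    finally show ?thesis unfolding \<Lambda>_def using tS Lx0 z0 zy0 by linarith
  qed
  obtain \<alpha> where \<alpha>: "\<forall>g\<in>G. 0 \<le> \<alpha> g \<and> \<alpha> g \<le> 1" and wyr: "wy = (\<Sum>g\<in>G. \<alpha> g *\<^sub>R g)"
    using Grep[OF wyb wyn] by blast
  define \<mu> where "\<mu> g = \<alpha> g + \<tau>'" for g
  define M where "M = 1 + \<tau>'"
  have mu_b: "\<forall>g\<in>G. \<tau>' \<le> \<mu> g \<and> \<mu> g \<le> M" unfolding \<mu>_def M_def using \<alpha> by auto
  have mu_pos: "\<forall>g\<in>G. \<mu> g > 0" using mu_b tp0 by force
  have yrep: "y = (\<Sum>g\<in>G. \<mu> g *\<^sub>R g)"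
  proof -
    have "(\<Sum>g\<in>G. \<mu> g *\<^sub>R g) = (\<Sum>g\<in>G. \<alpha> g *\<^sub>R g) + \<tau>' *\<^sub>R S"
      unfolding \<mu>_def S_def by (simp add: scaleR_add_left sum.distrib scaleR_sum_right)
    also have "\<dots> = y" unfolding wyr[symmetric] wy_def by simp
    finally show ?thesis by simp
  qed
  define Rf where "Rf = Rm gp gm \<eta>"
  have Rsum: "\<And>v. (\<Sum>g\<in>G. Rf v g *\<^sub>R g) = v" unfolding Rf_def by (rule Rm_sum[OF Gfin gpm eta0])
  have Rlin: "\<And>a g. Rf (\<Sum>h\<in>G. a h *\<^sub>R h) g = (\<Sum>h\<in>G. a h * Rf h g)" unfolding Rf_def by (rule Rm_lin[OF Gfin])
  define c0 :: "real^'b \<Rightarrow> real^'a" where "c0 g = (\<chi> i. \<Sum>l\<in>UNIV. x$(i,l) * rr gp gm \<eta> l g)" for g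
  have c0rep: "x$(i,j) = (\<Sum>g\<in>G. (c0 g)$i * g$j)" for i j
  proof -
    have ax: "(\<Sum>g\<in>G. rr gp gm \<eta> l g * g$j) = (axis l (1::real))$j" for l
    proof -
      have "(\<Sum>g\<in>G. rr gp gm \<eta> l g *\<^sub>R g) = axis l 1"
        using rr_sum[OF Gfin _ _ _ eta0, of gp l gm] gpm by auto
      then have "(\<Sum>g\<in>G. rr gp gm \<eta> l g *\<^sub>R g)$j = (axis l (1::real))$j" by simp
      then show ?thesis by (simp add: sum_component)
    qed
    have "(\<Sum>g\<in>G. (c0 g)$i * g$j) = (\<Sum>g\<in>G. \<Sum>l\<in>UNIV. x$(i,l) * (rr gp gm \<eta> l g * g$j))"
      unfolding c0_def by (simp add: sum_distrib_right mult.assoc)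
    also have "\<dots> = (\<Sum>l\<in>UNIV. \<Sum>g\<in>G. x$(i,l) * (rr gp gm \<eta> l g * g$j))" by (rule sum.swap)
    also have "\<dots> = (\<Sum>l\<in>UNIV. x$(i,l) * (axis l (1::real))$j)"
      by (simp only: sum_distrib_left[symmetric] ax)
    also have "\<dots> = (\<Sum>l\<in>UNIV. if j = l then x$(i,l) else 0)" by (intro sum.cong refl) (simp add: axis_def)
    also have "\<dots> = x$(i,j)" by (simp add: sum.delta)
    finally show ?thesis by simp
  qed
  have uc0: "u \<bullet> c0 g = Rf (Xm x u) g" for u g
  proof -
    have "u \<bullet> c0 g = (\<Sum>i\<in>UNIV. \<Sum>l\<in>UNIV. u$i * x$(i,l) * rr gp gm \<eta> l g)"
      unfolding c0_def inner_real_vec by (simp add: sum_distrib_left mult.assoc)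
    also have "\<dots> = (\<Sum>l\<in>UNIV. \<Sum>i\<in>UNIV. u$i * x$(i,l) * rr gp gm \<eta> l g)" by (rule sum.swap)
    also have "\<dots> = Rf (Xm x u) g"
      unfolding Rf_def Rm_def Xm_def by (simp add: sum_distrib_right)
    finally show ?thesis .
  qed
  define \<tau> where "\<tau> = \<zeta> / (2 * (norm y + 1))"
  have t0: "\<tau> > 0" unfolding \<tau>_def
    by (rule divide_pos_pos[OF z0]) (smt (verit) norm_ge_zero)
  have ty: "\<tau> * norm y \<le> \<zeta> / 2"
  proof -
    have q: "norm y / (norm y + 1) \<le> 1" by (smt (verit) norm_ge_zero divide_le_eq_1)
    have "\<tau> * norm y = (\<zeta> / 2) * (norm y / (norm y + 1))"
      unfolding \<tau>_def by (simp add: field_simps)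
    also have "\<dots> \<le> (\<zeta> / 2) * 1" using q z0 by (intro mult_left_mono) auto
    finally show ?thesis by simp
  qed
  define cc where "cc = \<tau> * \<tau>'"
  define Ck where "Ck = 1 + \<tau> * M"
  have cc0: "cc > 0" unfolding cc_def using t0 tp0 by simp
  have kap: "\<exists>\<kappa>. (\<forall>h\<in>G. cc * norm u \<le> \<kappa> h \<and> \<kappa> h \<le> Ck * norm u) \<and> Xm x u = (\<Sum>h\<in>G. \<kappa> h *\<^sub>R h)"
    if DA: "\<forall>a\<in>CA. 0 \<le> u \<bullet> a" and un: "u \<noteq> 0" for u
  proof -
    define s where "s = norm u"
    have s0: "s > 0" unfolding s_def using un by simp
    define w where "w = (1 / s) *\<^sub>R Xm x u - \<tau> *\<^sub>R y"
    have wb: "cball w \<rho> \<subseteq> CB"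
    proof
      fix p assume "p \<in> cball w \<rho>"
      then have d1: "dist w p \<le> \<rho>" by simp
      have "dist ((1 / s) *\<^sub>R Xm x u) p \<le> dist ((1 / s) *\<^sub>R Xm x u) w + dist w p" by (rule dist_triangle)
      also have "dist ((1 / s) *\<^sub>R Xm x u) w = \<tau> * norm y" unfolding w_def dist_norm using t0 by simp
      finally have d2: "dist ((1 / s) *\<^sub>R Xm x u) p \<le> \<zeta>" using d1 ty rz by linarith
      have "dist (Xm x u) (s *\<^sub>R p) = s * dist ((1 / s) *\<^sub>R Xm x u) p"
      proof -
        have "Xm x u - s *\<^sub>R p = s *\<^sub>R ((1 / s) *\<^sub>R Xm x u - p)" using s0 by (simp add: scaleR_diff_right)
        then show ?thesis unfolding dist_norm using s0 by simp
      qed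
      also have "\<dots> \<le> s * \<zeta>" using d2 s0 by simp
      finally have "s *\<^sub>R p \<in> cball (Xm x u) (\<zeta> * norm u)" unfolding s_def by (simp add: mult.commute)
      then have "s *\<^sub>R p \<in> CB" using ballX[OF DA] by auto
      have cB: "\<And>z c. z \<in> CB \<Longrightarrow> c \<ge> 0 \<Longrightarrow> c *\<^sub>R z \<in> CB" using CB(3) unfolding cone_def by blast
      have "(1 / s) *\<^sub>R (s *\<^sub>R p) \<in> CB" by (rule cB[OF \<open>s *\<^sub>R p \<in> CB\<close>]) (use s0 in simp)
      then show "p \<in> CB" using s0 by simp
    qed
    have wn: "norm w \<le> \<Lambda>"
    proof -
      have "norm w \<le> norm ((1 / s) *\<^sub>R Xm x u) + norm (\<tau> *\<^sub>R y)" unfolding w_def by (rule norm_triangle_ineq4)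
      also have "norm ((1 / s) *\<^sub>R Xm x u) = norm (Xm x u) / s" using s0 by simp
      also have "norm (\<tau> *\<^sub>R y) = \<tau> * norm y" using t0 by simp
      finally have "norm w \<le> norm (Xm x u) / s + \<tau> * norm y" .
      moreover have "norm (Xm x u) / s \<le> Lx" using Xb[of u] s0 unfolding s_def by (simp add: divide_le_eq)
      ultimately show ?thesis unfolding \<Lambda>_def using ty z0 zy0 norm_ge_zero[of y] by linarith
    qed
    obtain au where au: "\<forall>g\<in>G. 0 \<le> au g \<and> au g \<le> 1" and wr: "w = (\<Sum>g\<in>G. au g *\<^sub>R g)"
      using Grep[OF wb wn] by blast
    define \<kappa> where "\<kappa> h = s * (au h + \<tau> * \<mu> h)" for h
    have Xr: "Xm x u = (\<Sum>h\<in>G. \<kappa> h *\<^sub>R h)"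
    proof -
      have "Xm x u = s *\<^sub>R (w + \<tau> *\<^sub>R y)" unfolding w_def using s0 by simp
      also have "\<dots> = s *\<^sub>R ((\<Sum>g\<in>G. au g *\<^sub>R g) + \<tau> *\<^sub>R (\<Sum>g\<in>G. \<mu> g *\<^sub>R g))"
        using wr yrep by simp
      also have "\<dots> = (\<Sum>h\<in>G. \<kappa> h *\<^sub>R h)"
        unfolding \<kappa>_def by (simp add: scaleR_sum_right scaleR_add_right sum.distrib[symmetric] scaleR_add_left algebra_simps)
      finally show ?thesis .
    qed
    have kb: "\<forall>h\<in>G. cc * norm u \<le> \<kappa> h \<and> \<kappa> h \<le> Ck * norm u"
    proof
      fix h assume h: "h \<in> G"
      have a1: "0 \<le> au h" "au h \<le> 1" using au h by auto
      have m1: "\<tau>' \<le> \<mu> h" "\<mu> h \<le> M" using mu_b h by auto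
      have "\<tau> * \<tau>' \<le> au h + \<tau> * \<mu> h" using a1 m1 t0 by (smt (verit) mult_left_mono)
      moreover have "au h + \<tau> * \<mu> h \<le> 1 + \<tau> * M" using a1 m1 t0 by (smt (verit) mult_left_mono)
      ultimately show "cc * norm u \<le> \<kappa> h \<and> \<kappa> h \<le> Ck * norm u"
        unfolding \<kappa>_def cc_def Ck_def s_def using s0 unfolding s_def
        by (simp add: mult.commute mult_right_mono)
    qed
    show ?thesis by (rule exI[of _ \<kappa>]) (use Xr kb in simp)
  qed
  define E1 where "E1 = (\<Sum>h\<in>G. \<bar>rho G Rf (\<lambda>g. if h = g then 1 else 0) h\<bar>)"
  have E10: "E1 \<ge> 0" unfolding E1_def by (simp add: sum_nonneg)
  define nG where "nG = real (card G)"
  have nG1: "nG \<ge> 1" unfolding nG_def using Gfin Gne by (simp add: Suc_leI card_gt_0_iff)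
  have M0: "M > 0" unfolding M_def using tp0 by simp
  have Ck0: "Ck > 0" unfolding Ck_def using t0 M0 by (simp add: add_pos_nonneg)
  define A where "A = nG * Ck^2 * M / (r * cc)"
  have A0: "A > 0" unfolding A_def using nG1 Ck0 M0 r0 cc0 by simp
  define k where "k = nat \<lceil>2 * A * norm a0 * E1 * M / (\<tau>'^2 * cc)\<rceil> + 1"
  have k1: "k \<ge> 1" unfolding k_def by simp
  have kbig: "2 * A * norm a0 * E1 * M / (\<tau>'^2 * cc) \<le> real k"
    unfolding k_def by (simp add: of_nat_nat) linarith
  define \<theta> where "\<theta> = A / real k"
  have th0: "\<theta> > 0" unfolding \<theta>_def using A0 k1 by simp
  define c where "c \<nu> g = c0 g + (\<theta> * rho G Rf \<nu> g) *\<^sub>R a0" for \<nu> g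
  have xrep: "x$(i,j) = (\<Sum>g\<in>G. (c \<nu> g)$i * g$j)" for \<nu> i j
  proof -
    have z: "(\<Sum>g\<in>G. rho G Rf \<nu> g * g$j) = 0"
    proof -
      have "(\<Sum>g\<in>G. rho G Rf \<nu> g *\<^sub>R g) = 0" by (rule rho_F1[OF Rsum])
      then have "(\<Sum>g\<in>G. rho G Rf \<nu> g *\<^sub>R g)$j = 0" by simp
      then show ?thesis by (simp add: sum_component)
    qed
    have "(\<Sum>g\<in>G. (c \<nu> g)$i * g$j) = (\<Sum>g\<in>G. (c0 g)$i * g$j) + \<theta> * a0$i * (\<Sum>g\<in>G. rho G Rf \<nu> g * g$j)"
      unfolding c_def by (simp add: algebra_simps sum.distrib sum_distrib_left)
    then show ?thesis using z c0rep[of i j] by simp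
  qed
  have Sym: "id_tensor_sym_proj k (x_tensor_ypow x y k)
    = (\<lambda>i js. \<Sum>t\<in>PiE {..<k} (\<lambda>_. G). elem_tensor (Dt k \<mu> c t) (map t [0..<k]) i js)"
    by (rule sym_expand[OF Gfin k1 yrep xrep])
  have Din: "Dt k \<mu> c t \<in> CA" if t: "t \<in> PiE {..<k} (\<lambda>_. G)" for t
  proof (rule Dt_in_C[OF CA _ mu_pos k1])
    show tG: "\<forall>q<k. t q \<in> G" using t by auto
    fix u assume DA: "\<forall>a\<in>CA. 0 \<le> u \<bullet> a"
    show "0 \<le> u \<bullet> (\<Sum>p<k. (1 / \<mu> (t p)) *\<^sub>R c (nuP k \<mu> t p) (t p))"
    proof (cases "u = 0")
      case True then show ?thesis by simp
    next
      case False
      obtain \<kappa> where kb: "\<forall>h\<in>G. cc * norm u \<le> \<kappa> h \<and> \<kappa> h \<le> Ck * norm u"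
        and Xr: "Xm x u = (\<Sum>h\<in>G. \<kappa> h *\<^sub>R h)"
        using kap[OF DA False] by blast
      have hc: "\<forall>g\<in>G. u \<bullet> c0 g = Rf (\<Sum>h\<in>G. \<kappa> h *\<^sub>R h) g" using uc0 Xr by simp
      have s0: "norm u > 0" using False by simp
      have U1: "r * norm u \<le> u \<bullet> a0" by (rule Ulow[OF DA])
      have U0: "u \<bullet> a0 > 0" using U1 r0 s0 by (smt (verit) mult_pos_pos)
      have AB: "nG * (Ck * norm u)^2 \<le> 2 * \<theta> * (u \<bullet> a0) * (cc * norm u) * (real k / M)"
           "2 * \<theta> * (u \<bullet> a0) * (real k * E1 / \<tau>'^2) \<le> (cc * norm u) * (real k / M)"
        using A_bounds[OF s0 r0 cc0 M0 _ _ E10 tp0 U1 Uup A_def kbig _ \<theta>_def] nG1 k1 by auto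
      show ?thesis unfolding c_def
        by (rule E_nonneg[OF Gfin Rlin tG mu_b tp0 hc, of "cc * norm u" "Ck * norm u"])
           (use kb cc0 s0 th0 U0 AB in \<open>auto simp: nG_def E1_def\<close>)
    qed
  qed
  have mem: "(\<lambda>i js. \<Sum>t\<in>PiE {..<k} (\<lambda>_. G). elem_tensor (Dt k \<mu> c t) (map t [0..<k]) i js)
      \<in> min_tensor_pow CA CB k"
    unfolding min_tensor_pow_def
  proof (rule sum_in_conv_fun)
    show "finite (PiE {..<k} (\<lambda>_. G))" using Gfin by (intro finite_PiE) auto
    show "PiE {..<k} (\<lambda>_. G) \<noteq> {}" using Gne by (simp add: PiE_eq_empty_iff)
    show "\<forall>t\<in>PiE {..<k} (\<lambda>_. G). elem_tensor (Dt k \<mu> c t) (map t [0..<k])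
        \<in> {elem_tensor a bs |a bs. a \<in> CA \<and> length bs = k \<and> set bs \<subseteq> CB}"
    proof
      fix t assume t: "t \<in> PiE {..<k} (\<lambda>_. G)"
      have "set (map t [0..<k]) \<subseteq> CB" using t GB by auto
      show "elem_tensor (Dt k \<mu> c t) (map t [0..<k]) \<in> {elem_tensor a bs |a bs. a \<in> CA \<and> length bs = k \<and> set bs \<subseteq> CB}"
        by (rule CollectI, rule exI[of _ "Dt k \<mu> c t"], rule exI[of _ "map t [0..<k]"])
           (use Din[OF t] \<open>set (map t [0..<k]) \<subseteq> CB\<close> in simp)
    qed
    show "\<forall>s\<in>{elem_tensor a bs |a bs. a \<in> CA \<and> length bs = k \<and> set bs \<subseteq> CB}. \<forall>c::real. c \<ge> 0 \<longrightarrow>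
        (\<lambda>i js. c * s i js) \<in> {elem_tensor a bs |a bs. a \<in> CA \<and> length bs = k \<and> set bs \<subseteq> CB}"
    proof (intro ballI allI impI)
      fix s and d :: real assume s: "s \<in> {elem_tensor a bs |a bs. a \<in> CA \<and> length bs = k \<and> set bs \<subseteq> CB}" and d: "d \<ge> 0"
      then obtain a bs where a: "s = elem_tensor a bs" "a \<in> CA" "length bs = k" "set bs \<subseteq> CB" by blast
      have "(\<lambda>i js. d * s i js) = elem_tensor (d *\<^sub>R a) bs"
        unfolding a(1) elem_tensor_def by (intro ext) simp
      moreover have "d *\<^sub>R a \<in> CA" using CA(3) a(2) d unfolding cone_def by simp
      ultimately show "(\<lambda>i js. d * s i js) \<in> {elem_tensor a bs |a bs. a \<in> CA \<and> length bs = k \<and> set bs \<subseteq> CB}"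
        using a(3,4) by blast
    qed
  qed
  show ?thesis by (rule exI[of _ k]) (use k1 Sym mem in simp)
qed


end
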